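(* Let $Q=(Q_t)_{t\ge0}$ be a Feller semigroup on $C_0(G)$ such that for all $f\in D(\alpha_1,\cdots,\alpha_N)$, $x\in G$, $t\ge0$, $$Q_tf(x)=f(x)+\frac12\int_0^tQ_uf''(x)\,du.$$ Then $Q$ is the semigroup of the Walsh Brownian motion $W(\alpha_1,\cdots,\alpha_N)$.
   Context: $G$ is the union of $N$ half-lines $D_i=\{h\vec e_i:h\ge0\}$ glued at $0$ with distance $d(h\vec e_i,h'\vec e_j)=h+h'$ ($i\ne j$), $|h-h'|$ ($i=j$); $\alpha_1,\dots,\alpha_N>0$, $\sum\alpha_i=1$. $C_0(G)$: continuous functions vanishing at infinity. For $f:G\to\mathbb R$, $f_i(h)=f(h\vec e_i)$. $C^2_b(G^* )$: $f\in C(G)$ with each $f_i$ twice differentiable on $]0,\infty[$, $f_i',f_i''$ bounded continuous on $]0,\infty[$ with finite limits at $0+$. $D(\alpha_1,\cdots,\alpha_N)=\{f\in C^2_b(G^* ):\sum\alpha_if'_i(0+)=0\}$; $f''(x)=f_i''(|x|)$ for $x\in D_i\setminus\{0\}$, $f''(0)=f''_N(0+)$. Walsh Brownian motion $W(\alpha_1,\cdots,\alpha_N)$ has semigroup $P_tf(h\vec e_j)=2\sum_i\alpha_ip_tf_i(-h)+p_tf_j(h)-p_tf_j(-h)$ ($h>0$), $P_tf(0)=2\sum_i\alpha_ip_tf_i(0)$, with $f_i$ extended by $0$ on $]-\infty,0[$ and $p_t$ the one-dimensional heat semigroup. *)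

theory Defs
  imports "HOL-Probability.Probability"
begin

text \<open>A point h e_i with h > 0 is represented by the pair (i, h); the origin
  by the canonical pair (0, 0).\<close>

definition Gset :: "nat \<Rightarrow> (nat \<times> real) set" where
  "Gset N = {(i, h). 1 \<le> i \<and> i \<le> N \<and> h > 0} \<union> {(0, 0)}"

definition gpt :: "nat \<Rightarrow> real \<Rightarrow> nat \<times> real" where
  "gpt i h = (if h = 0 then (0, 0) else (i, h))"

definition gdist :: "nat \<times> real \<Rightarrow> nat \<times> real \<Rightarrow> real" where
  "gdist x y = (if fst x = fst y then \<bar>snd x - snd y\<bar> else snd x + snd y)"

definition Gm :: "nat \<Rightarrow> (nat \<times> real) measure" where
  "Gm N = restrict_space borel (Gset N)"

definition gcont :: "nat \<Rightarrow> (nat \<times> real \<Rightarrow> real) \<Rightarrow> bool" where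
  "gcont N f \<longleftrightarrow> (\<forall>x\<in>Gset N. \<forall>e>0. \<exists>d>0. \<forall>y\<in>Gset N. gdist x y < d \<longrightarrow> \<bar>f y - f x\<bar> < e)"

definition C0 :: "nat \<Rightarrow> (nat \<times> real \<Rightarrow> real) set" where
  "C0 N = {f. gcont N f \<and> (\<forall>e>0. \<exists>R. \<forall>y\<in>Gset N. snd y > R \<longrightarrow> \<bar>f y\<bar> < e)}"

definition fbr :: "(nat \<times> real \<Rightarrow> real) \<Rightarrow> nat \<Rightarrow> real \<Rightarrow> real" where
  "fbr f i = (\<lambda>h. f (gpt i h))"

definition D1 :: "(nat \<times> real \<Rightarrow> real) \<Rightarrow> nat \<Rightarrow> real \<Rightarrow> real" where
  "D1 f i = deriv (fbr f i)"

definition D2 :: "(nat \<times> real \<Rightarrow> real) \<Rightarrow> nat \<Rightarrow> real \<Rightarrow> real" where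
  "D2 f i = deriv (D1 f i)"

definition C2b :: "nat \<Rightarrow> (nat \<times> real \<Rightarrow> real) set" where
  "C2b N = {f. gcont N f \<and>
     (\<forall>i\<in>{1..N}.
        (\<forall>h>0. fbr f i differentiable (at h) \<and> D1 f i differentiable (at h)) \<and>
        bounded (D1 f i ` {0<..}) \<and> continuous_on {0<..} (D1 f i) \<and>
        bounded (D2 f i ` {0<..}) \<and> continuous_on {0<..} (D2 f i) \<and>
        (\<exists>L. (D1 f i \<longlongrightarrow> L) (at_right 0)) \<and>
        (\<exists>L. (D2 f i \<longlongrightarrow> L) (at_right 0)))}"

definition Dal :: "nat \<Rightarrow> (nat \<Rightarrow> real) \<Rightarrow> (nat \<times> real \<Rightarrow> real) set" where
  "Dal N \<alpha> = {f \<in> C2b N. (\<Sum>i=1..N. \<alpha> i * Lim (at_right 0) (D1 f i)) = 0}"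

definition fpp :: "nat \<Rightarrow> (nat \<times> real \<Rightarrow> real) \<Rightarrow> nat \<times> real \<Rightarrow> real" where
  "fpp N f x = (if snd x = 0 then Lim (at_right 0) (D2 f N) else D2 f (fst x) (snd x))"

definition gauss :: "real \<Rightarrow> real \<Rightarrow> real" where
  "gauss t y = exp (- (y\<^sup>2) / (2 * t)) / sqrt (2 * pi * t)"

definition heat :: "real \<Rightarrow> (real \<Rightarrow> real) \<Rightarrow> real \<Rightarrow> real" where
  "heat t g y = (if t = 0 then g y else (\<integral>z. g z * gauss t (y - z) \<partial>lborel))"

definition fext :: "(nat \<times> real \<Rightarrow> real) \<Rightarrow> nat \<Rightarrow> real \<Rightarrow> real" where
  "fext f i z = (if z \<ge> 0 then f (gpt i z) else 0)"

definition walshP :: "nat \<Rightarrow> (nat \<Rightarrow> real) \<Rightarrow> real \<Rightarrow> (nat \<times> real \<Rightarrow> real) \<Rightarrow> nat \<times> real \<Rightarrow> real" where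
  "walshP N \<alpha> t f x =
    (if t = 0 then f x
     else if snd x = 0 then 2 * (\<Sum>i=1..N. \<alpha> i * heat t (fext f i) 0)
     else 2 * (\<Sum>i=1..N. \<alpha> i * heat t (fext f i) (- snd x))
          + heat t (fext f (fst x)) (snd x) - heat t (fext f (fst x)) (- snd x))"

section \<open>Feller semigroups, given by their (sub-Markov) transition kernels\<close>

definition Qop :: "(real \<Rightarrow> nat \<times> real \<Rightarrow> (nat \<times> real) measure) \<Rightarrow> real \<Rightarrow> (nat \<times> real \<Rightarrow> real) \<Rightarrow> nat \<times> real \<Rightarrow> real" where
  "Qop K t f x = (\<integral>y. f y \<partial>(K t x))"

definition feller :: "nat \<Rightarrow> (real \<Rightarrow> nat \<times> real \<Rightarrow> (nat \<times> real) measure) \<Rightarrow> bool" where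
  "feller N K \<longleftrightarrow>
    (\<forall>t\<ge>0. K t \<in> measurable (Gm N) (subprob_algebra (Gm N))) \<and>
    (\<forall>t\<ge>0. \<forall>f\<in>C0 N. Qop K t f \<in> C0 N) \<and>
    (\<forall>f\<in>C0 N. \<forall>x\<in>Gset N. Qop K 0 f x = f x) \<and>
    (\<forall>s\<ge>0. \<forall>t\<ge>0. \<forall>f\<in>C0 N. \<forall>x\<in>Gset N. Qop K (s + t) f x = Qop K s (Qop K t f) x) \<and>
    (\<forall>f\<in>C0 N. \<forall>e>0. \<exists>d>0. \<forall>t. 0 < t \<and> t < d \<longrightarrow> (\<forall>x\<in>Gset N. \<bar>Qop K t f x - f x\<bar> \<le> e))"

end

theory Submission
  imports Defs
begin


lemma std_char_int:
  "(\<integral>x. std_normal_density x *\<^sub>R iexp (a * x) \<partial>lborel) = complex_of_real (exp (- (a^2) / 2))"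
proof -
  have "char std_normal_distribution a = (\<integral>x. std_normal_density x *\<^sub>R iexp (a * x) \<partial>lborel)"
    unfolding char_def by (subst integral_density) auto
  then show ?thesis by (simp add: char_std_normal_distribution)
qed

lemma std_char_integrable: "integrable lborel (\<lambda>x. std_normal_density x *\<^sub>R iexp (a * x))"
  by (rule Bochner_Integration.integrable_bound[OF integrable_normal_density[where \<mu>=0 and \<sigma>=1]])
     (auto simp: norm_exp_i_times simp del: of_real_mult)

lemma std_cos: "(\<integral>x. std_normal_density x * cos (a * x) \<partial>lborel) = exp (- (a^2) / 2)"
proof -
  have "Re (\<integral>x. std_normal_density x *\<^sub>R iexp (a * x) \<partial>lborel) = (\<integral>x. Re (std_normal_density x *\<^sub>R iexp (a * x)) \<partial>lborel)"
    using integral_Re[OF std_char_integrable[of a]] by simp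
  also have "(\<lambda>x. Re (std_normal_density x *\<^sub>R iexp (a * x))) = (\<lambda>x. std_normal_density x * cos (a * x))"
    by (auto simp: Re_exp)
  finally show ?thesis using std_char_int[of a] by simp
qed

lemma std_sin: "(\<integral>x. std_normal_density x * sin (a * x) \<partial>lborel) = 0"
proof -
  have "Im (\<integral>x. std_normal_density x *\<^sub>R iexp (a * x) \<partial>lborel) = (\<integral>x. Im (std_normal_density x *\<^sub>R iexp (a * x)) \<partial>lborel)"
    using integral_Im[OF std_char_integrable[of a]] by simp
  also have "(\<lambda>x. Im (std_normal_density x *\<^sub>R iexp (a * x))) = (\<lambda>x. std_normal_density x * sin (a * x))"
    by (auto simp: Im_exp)
  finally show ?thesis using std_char_int[of a] by simp
qed



lemma gauss_even: "gauss t (- y) = gauss t y"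
  by (simp add: gauss_def)

lemma gauss_nonneg: "t \<ge> 0 \<Longrightarrow> gauss t y \<ge> 0"
  by (simp add: gauss_def)

lemma gauss_scale: "t > 0 \<Longrightarrow> gauss t (sqrt t * u) = std_normal_density u / sqrt t"
proof -
  assume t: "t > 0"
  have "(sqrt t * u)^2 / (2 * t) = u^2 / 2" using t by (simp add: power_mult_distrib)
  moreover have "sqrt (2 * pi * t) = sqrt (2 * pi) * sqrt t" by (simp add: real_sqrt_mult)
  ultimately show ?thesis unfolding gauss_def std_normal_density_def
    by (simp add: field_simps)
qed

lemma gauss_normal: "t > 0 \<Longrightarrow> gauss t y = normal_density 0 (sqrt t) y"
  by (simp add: gauss_def normal_density_def field_simps)

lemma gauss_meas[measurable]: "gauss t \<in> borel_measurable borel"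
  unfolding gauss_def by measurable

lemma gauss_integrable: "t > 0 \<Longrightarrow> integrable lborel (\<lambda>z. gauss t (y - z))"
proof -
  assume t: "t > 0"
  have "integrable lborel (\<lambda>z. normal_density y (sqrt t) z)" by (rule integrable_normal_density) (use t in simp)
  moreover have "normal_density y (sqrt t) z = gauss t (y - z)" for z
    using t by (simp add: gauss_def normal_density_def power2_commute)
  ultimately show ?thesis by simp
qed

lemma gauss_integrable_bdd:
  assumes t: "t > 0" and g[measurable]: "g \<in> borel_measurable borel" and b: "\<And>z. \<bar>g z\<bar> \<le> B"
  shows "integrable lborel (\<lambda>z. gauss t (y - z) * g z)"
proof -
  have "integrable lborel (\<lambda>z. B * gauss t (y - z))"
    using gauss_integrable[OF t] by simp
  then show ?thesis
    apply (rule Bochner_Integration.integrable_bound)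
     apply measurable
  proof (intro AE_I2)
    fix x
    have "\<bar>g x\<bar> \<le> \<bar>B\<bar>" using b[of x] by linarith
    then show "norm (gauss t (y - x) * g x) \<le> norm (B * gauss t (y - x))"
      using t gauss_nonneg[of t "y - x"] by (simp add: abs_mult) (metis mult.commute mult_right_mono)
  qed
qed

lemma gauss_cos:
  assumes t: "t > 0"
  shows "(\<integral>z. gauss t (y - z) * cos (w * z) \<partial>lborel) = exp (- (w^2 * t) / 2) * cos (w * y)"
proof -
  let ?s = "sqrt t"
  have s: "?s > 0" using t by simp
  have "(\<integral>z. gauss t (y - z) * cos (w * z) \<partial>lborel)
      = \<bar>?s\<bar> *\<^sub>R (\<integral>u. gauss t (y - (y + ?s * u)) * cos (w * (y + ?s * u)) \<partial>lborel)"
    using s by (intro lborel_integral_real_affine) simp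
  also have "(\<lambda>u. gauss t (y - (y + ?s * u)) * cos (w * (y + ?s * u)))
     = (\<lambda>u. (cos (w * y) / ?s) * (std_normal_density u * cos ((w * ?s) * u))
            - (sin (w * y) / ?s) * (std_normal_density u * sin ((w * ?s) * u)))"
  proof
    fix u
    have "gauss t (y - (y + ?s * u)) = std_normal_density u / ?s"
      using gauss_scale[OF t, of u] gauss_even[of t "?s * u"] by simp
    then show "gauss t (y - (y + ?s * u)) * cos (w * (y + ?s * u)) =
      (cos (w * y) / ?s) * (std_normal_density u * cos ((w * ?s) * u))
            - (sin (w * y) / ?s) * (std_normal_density u * sin ((w * ?s) * u))"
      by (simp add: distrib_left cos_add algebra_simps)
  qed
  also have "(\<integral>u. (cos (w * y) / ?s) * (std_normal_density u * cos ((w * ?s) * u))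
            - (sin (w * y) / ?s) * (std_normal_density u * sin ((w * ?s) * u)) \<partial>lborel)
     = (cos (w * y) / ?s) * exp (- ((w * ?s)^2) / 2) - (sin (w * y) / ?s) * 0"
  proof -
    have i1: "integrable lborel (\<lambda>u. std_normal_density u * cos ((w * ?s) * u))"
      using std_char_integrable[of "w * ?s"] integrable_Re by (fastforce simp: Re_exp)
    have i2: "integrable lborel (\<lambda>u. std_normal_density u * sin ((w * ?s) * u))"
      using std_char_integrable[of "w * ?s"] integrable_Im by (fastforce simp: Im_exp)
    show ?thesis using i1 i2 by (simp add: std_cos std_sin)
  qed
  finally show ?thesis using s t by (simp add: power_mult_distrib)
qed

lemma gauss_sin:
  assumes t: "t > 0"
  shows "(\<integral>z. gauss t (y - z) * sin (w * z) \<partial>lborel) = exp (- (w^2 * t) / 2) * sin (w * y)"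
proof -
  let ?s = "sqrt t"
  have s: "?s > 0" using t by simp
  have "(\<integral>z. gauss t (y - z) * sin (w * z) \<partial>lborel)
      = \<bar>?s\<bar> *\<^sub>R (\<integral>u. gauss t (y - (y + ?s * u)) * sin (w * (y + ?s * u)) \<partial>lborel)"
    using s by (intro lborel_integral_real_affine) simp
  also have "(\<lambda>u. gauss t (y - (y + ?s * u)) * sin (w * (y + ?s * u)))
     = (\<lambda>u. (sin (w * y) / ?s) * (std_normal_density u * cos ((w * ?s) * u))
            + (cos (w * y) / ?s) * (std_normal_density u * sin ((w * ?s) * u)))"
  proof
    fix u
    have "gauss t (y - (y + ?s * u)) = std_normal_density u / ?s"
      using gauss_scale[OF t, of u] gauss_even[of t "?s * u"] by simp
    then show "gauss t (y - (y + ?s * u)) * sin (w * (y + ?s * u)) =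
      (sin (w * y) / ?s) * (std_normal_density u * cos ((w * ?s) * u))
            + (cos (w * y) / ?s) * (std_normal_density u * sin ((w * ?s) * u))"
      by (simp add: distrib_left sin_add algebra_simps)
  qed
  also have "(\<integral>u. (sin (w * y) / ?s) * (std_normal_density u * cos ((w * ?s) * u))
            + (cos (w * y) / ?s) * (std_normal_density u * sin ((w * ?s) * u)) \<partial>lborel)
     = (sin (w * y) / ?s) * exp (- ((w * ?s)^2) / 2) + (cos (w * y) / ?s) * 0"
  proof -
    have i1: "integrable lborel (\<lambda>u. std_normal_density u * cos ((w * ?s) * u))"
      using std_char_integrable[of "w * ?s"] integrable_Re by (fastforce simp: Re_exp)
    have i2: "integrable lborel (\<lambda>u. std_normal_density u * sin ((w * ?s) * u))"
      using std_char_integrable[of "w * ?s"] integrable_Im by (fastforce simp: Im_exp)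
    show ?thesis using i1 i2 by (simp add: std_cos std_sin)
  qed
  finally show ?thesis using s t by (simp add: power_mult_distrib)
qed



definition addm :: "real measure \<Rightarrow> real measure \<Rightarrow> real measure" where
  "addm A B = measure_of UNIV (sets borel) (\<lambda>S. emeasure A S + emeasure B S)"

context
  fixes A B :: "real measure"
  assumes sA: "sets A = sets borel" and sB: "sets B = sets borel"
begin

lemma mA: "borel_measurable A = borel_measurable borel"
  by (rule measurable_cong_sets[OF sA refl])
lemma mB: "borel_measurable B = borel_measurable borel"
  by (rule measurable_cong_sets[OF sB refl])

lemma sets_addm[simp]: "sets (addm A B) = sets borel"
  unfolding addm_def using sets.sigma_sets_eq[of borel] by simp

lemma space_addm[simp]: "space (addm A B) = UNIV"
  unfolding addm_def by simp

lemma emeasure_addm: "S \<in> sets borel \<Longrightarrow> emeasure (addm A B) S = emeasure A S + emeasure B S"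
  unfolding addm_def
proof (rule emeasure_measure_of_sigma)
  show "sigma_algebra UNIV (sets borel)"
    using sets.sigma_algebra_axioms[of borel] by simp
  show "positive (sets borel) (\<lambda>S. emeasure A S + emeasure B S)"
    by (auto simp: positive_def)
  show "countably_additive (sets borel) (\<lambda>S. emeasure A S + emeasure B S)"
    unfolding countably_additive_def
  proof (intro allI impI)
    fix F :: "nat \<Rightarrow> real set"
    assume F: "range F \<subseteq> sets borel" "disjoint_family F" "\<Union> (range F) \<in> sets borel"
    have "(\<Sum>i. emeasure A (F i)) = emeasure A (\<Union> (range F))"
      using F sA by (intro suminf_emeasure) auto
    moreover have "(\<Sum>i. emeasure B (F i)) = emeasure B (\<Union> (range F))"
      using F sB by (intro suminf_emeasure) auto
    ultimately show "(\<Sum>i. emeasure A (F i) + emeasure B (F i)) = emeasure A (\<Union> (range F)) + emeasure B (\<Union> (range F))"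
      by (metis suminf_add summableI)
  qed
qed

lemma mAB: "borel_measurable (addm A B) = borel_measurable borel"
  by (rule measurable_cong_sets) simp_all

lemma nn_integral_addm:
  assumes f: "f \<in> borel_measurable borel"
  shows "(\<integral>\<^sup>+x. f x \<partial>addm A B) = (\<integral>\<^sup>+x. f x \<partial>A) + (\<integral>\<^sup>+x. f x \<partial>B)"
  using f
proof (induction rule: borel_measurable_induct)
  case (cong f g)
  have "(\<integral>\<^sup>+x. f x \<partial>addm A B) = (\<integral>\<^sup>+x. g x \<partial>addm A B)"
    using cong by (intro nn_integral_cong) auto
  moreover have "(\<integral>\<^sup>+x. f x \<partial>A) = (\<integral>\<^sup>+x. g x \<partial>A)"
    using cong sets_eq_imp_space_eq[OF sA] by (intro nn_integral_cong) auto
  moreover have "(\<integral>\<^sup>+x. f x \<partial>B) = (\<integral>\<^sup>+x. g x \<partial>B)"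
    using cong sets_eq_imp_space_eq[OF sB] by (intro nn_integral_cong) auto
  ultimately show ?case using cong by simp
next
  case (set S)
  then show ?case using sA sB
    by (simp add: emeasure_addm)
next
  case (mult u c)
  have mu: "u \<in> borel_measurable (addm A B)" "u \<in> borel_measurable A" "u \<in> borel_measurable B"
    using mult by (simp_all add: mA mB mAB)
  show ?case using mult mu by (simp add: nn_integral_cmult distrib_left)
next
  case (add u v)
  have mu: "u \<in> borel_measurable (addm A B)" "u \<in> borel_measurable A" "u \<in> borel_measurable B"
    "v \<in> borel_measurable (addm A B)" "v \<in> borel_measurable A" "v \<in> borel_measurable B"
    using add by (simp_all add: mA mB mAB)
  show ?case using add mu by (simp add: nn_integral_add algebra_simps)
next
  case (seq U)
  have mu: "\<And>i. U i \<in> borel_measurable (addm A B)" "\<And>i. U i \<in> borel_measurable A" "\<And>i. U i \<in> borel_measurable B"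
    using seq by (simp_all add: mA mB mAB)
  have "(\<integral>\<^sup>+x. (SUP i. U i) x \<partial>addm A B) = (SUP i. (\<integral>\<^sup>+x. U i x \<partial>addm A B))"
    unfolding SUP_apply by (rule nn_integral_monotone_convergence_SUP) (use seq mu in auto)
  moreover have "(\<integral>\<^sup>+x. (SUP i. U i) x \<partial>A) = (SUP i. (\<integral>\<^sup>+x. U i x \<partial>A))"
    unfolding SUP_apply by (rule nn_integral_monotone_convergence_SUP) (use seq mu in auto)
  moreover have "(\<integral>\<^sup>+x. (SUP i. U i) x \<partial>B) = (SUP i. (\<integral>\<^sup>+x. U i x \<partial>B))"
    unfolding SUP_apply by (rule nn_integral_monotone_convergence_SUP) (use seq mu in auto)
  moreover have "incseq (\<lambda>i. (\<integral>\<^sup>+x. U i x \<partial>A))" "incseq (\<lambda>i. (\<integral>\<^sup>+x. U i x \<partial>B))"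
    using seq by (auto simp: incseq_def le_fun_def intro!: nn_integral_mono)
  ultimately show ?case using seq by (simp add: ennreal_SUP_add)
qed

lemma finite_addm: "finite_measure A \<Longrightarrow> finite_measure B \<Longrightarrow> finite_measure (addm A B)"
  apply (rule finite_measureI)
  using emeasure_addm[of UNIV] sets_eq_imp_space_eq[OF sA] sets_eq_imp_space_eq[OF sB]
  by (simp add: finite_measure.emeasure_finite)

lemma integral_addm:
  fixes g :: "real \<Rightarrow> real" and C :: real
  assumes fA: "finite_measure A" and fB: "finite_measure B"
    and g[measurable]: "g \<in> borel_measurable borel" and C: "\<And>x. \<bar>g x\<bar> \<le> C"
  shows "integral\<^sup>L (addm A B) g = integral\<^sup>L A g + integral\<^sup>L B g"
proof -
  interpret fA: finite_measure A by fact
  interpret fB: finite_measure B by fact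
  interpret fAB: finite_measure "addm A B" using finite_addm fA fB by simp
  have gm: "g \<in> borel_measurable A" "g \<in> borel_measurable B" "g \<in> borel_measurable (addm A B)"
    by (simp_all add: mA mB mAB)
  have iA: "integrable A g" by (rule fA.integrable_const_bound[of _ C]) (use C gm in auto)
  have iB: "integrable B g" by (rule fB.integrable_const_bound[of _ C]) (use C gm in auto)
  have iAB: "integrable (addm A B) g" by (rule fAB.integrable_const_bound[of _ C]) (use C gm in auto)
  have p: "(\<integral>\<^sup>+x. ennreal (g x) \<partial>addm A B) = (\<integral>\<^sup>+x. ennreal (g x) \<partial>A) + (\<integral>\<^sup>+x. ennreal (g x) \<partial>B)"
    by (rule nn_integral_addm) simp
  have n: "(\<integral>\<^sup>+x. ennreal (- g x) \<partial>addm A B) = (\<integral>\<^sup>+x. ennreal (- g x) \<partial>A) + (\<integral>\<^sup>+x. ennreal (- g x) \<partial>B)"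
    by (rule nn_integral_addm) simp
  have fin: "(\<integral>\<^sup>+x. ennreal (g x) \<partial>A) < top" "(\<integral>\<^sup>+x. ennreal (g x) \<partial>B) < top"
    "(\<integral>\<^sup>+x. ennreal (- g x) \<partial>A) < top" "(\<integral>\<^sup>+x. ennreal (- g x) \<partial>B) < top"
    using iA iB unfolding real_integrable_def by (auto simp: top.not_eq_extremum)
  show ?thesis
    unfolding real_lebesgue_integral_def[OF iA] real_lebesgue_integral_def[OF iB] real_lebesgue_integral_def[OF iAB] p n
    using fin by (simp add: enn2real_plus)
qed

lemma Re_char: "finite_measure M \<Longrightarrow> sets M = sets borel \<Longrightarrow> Re (char M w) = (\<integral>x. cos (w * x) \<partial>M)"
proof -
  assume fM: "finite_measure M" and sM: "sets M = sets borel"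
  interpret finite_measure M by fact
  have m: "borel_measurable M = borel_measurable borel" by (rule measurable_cong_sets[OF sM refl])
  have "integrable M (\<lambda>x. iexp (w * x))"
    by (rule integrable_const_bound[of _ 1]) (auto simp: m norm_exp_i_times simp del: of_real_mult)
  then show ?thesis unfolding char_def by (simp add: integral_Re[symmetric] Re_exp del: integral_Re)
qed

lemma Im_char: "finite_measure M \<Longrightarrow> sets M = sets borel \<Longrightarrow> Im (char M w) = (\<integral>x. sin (w * x) \<partial>M)"
proof -
  assume fM: "finite_measure M" and sM: "sets M = sets borel"
  interpret finite_measure M by fact
  have m: "borel_measurable M = borel_measurable borel" by (rule measurable_cong_sets[OF sM refl])
  have "integrable M (\<lambda>x. iexp (w * x))"
    by (rule integrable_const_bound[of _ 1]) (auto simp: m norm_exp_i_times simp del: of_real_mult)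
  then show ?thesis unfolding char_def by (simp add: integral_Im[symmetric] Im_exp del: integral_Im)
qed

lemma char_addm: "finite_measure A \<Longrightarrow> finite_measure B \<Longrightarrow> char (addm A B) w = char A w + char B w"
proof (rule complex_eqI)
  assume fA: "finite_measure A" and fB: "finite_measure B"
  have fAB: "finite_measure (addm A B)" using finite_addm fA fB by simp
  show "Re (char (addm A B) w) = Re (char A w + char B w)"
    using fA fB fAB sA sB by (simp add: Re_char integral_addm[where C=1])
  show "Im (char (addm A B) w) = Im (char A w + char B w)"
    using fA fB fAB sA sB by (simp add: Im_char integral_addm[where C=1])
qed

end


lemma FU_prob:
  assumes f1: "finite_measure M1" and f2: "finite_measure M2"
    and s1: "sets M1 = sets borel" and s2: "sets M2 = sets borel"
    and ch: "\<And>w. char M1 w = char M2 w" and S: "S \<in> sets borel"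
  shows "emeasure M1 S = emeasure M2 S"
proof -
  interpret f1: finite_measure M1 by fact
  interpret f2: finite_measure M2 by fact
  have sp1: "space M1 = UNIV" using sets_eq_imp_space_eq[OF s1] by simp
  have sp2: "space M2 = UNIV" using sets_eq_imp_space_eq[OF s2] by simp
  have c0: "char M1 0 = complex_of_real (measure M1 UNIV)" "char M2 0 = complex_of_real (measure M2 UNIV)"
    unfolding char_def using sp1 sp2 by (simp_all add: scaleR_conv_of_real)
  define m where "m = measure M1 UNIV"
  have m2: "measure M2 UNIV = m" using ch[of 0] c0 m_def by simp
  show ?thesis
  proof (cases "m = 0")
    case True
    have "emeasure M1 S \<le> emeasure M1 UNIV" by (rule emeasure_mono) (use sets.top[of M1] sp1 in auto)
    then have "emeasure M1 S = 0"
      using True m_def f1.emeasure_eq_measure[of UNIV] by simp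
    moreover have "emeasure M2 S \<le> emeasure M2 UNIV" by (rule emeasure_mono) (use sets.top[of M2] sp2 in auto)
    then have "emeasure M2 S = 0"
      using True m2 f2.emeasure_eq_measure[of UNIV] by simp
    ultimately show ?thesis by simp
  next
    case False
    have mpos: "m > 0" using False m_def measure_nonneg[of M1 UNIV] by linarith
    define P1 where "P1 = density M1 (\<lambda>_. ennreal (1/m))"
    define P2 where "P2 = density M2 (\<lambda>_. ennreal (1/m))"
    have rd1: "real_distribution P1"
      unfolding real_distribution_def real_distribution_axioms_def P1_def
      using mpos s1 sp1 f1.emeasure_eq_measure[of UNIV]
      by (auto intro!: prob_spaceI simp: emeasure_density_const m_def ennreal_mult''[symmetric])
    have rd2: "real_distribution P2"
      unfolding real_distribution_def real_distribution_axioms_def P2_def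
      using mpos s2 sp2 f2.emeasure_eq_measure[of UNIV] m2
      by (auto intro!: prob_spaceI simp: emeasure_density_const ennreal_mult''[symmetric])
    have "char P1 w = complex_of_real (1/m) * char M1 w" for w
      unfolding P1_def char_def using mpos by (subst integral_density) (auto simp: measurable_cong_sets[OF s1 refl] scaleR_conv_of_real)
    moreover have "char P2 w = complex_of_real (1/m) * char M2 w" for w
      unfolding P2_def char_def using mpos by (subst integral_density) (auto simp: measurable_cong_sets[OF s2 refl] scaleR_conv_of_real)
    ultimately have "char P1 = char P2" using ch by auto
    then have "P1 = P2" using Levy_uniqueness rd1 rd2 by blast
    then have "emeasure P1 S = emeasure P2 S" by simp
    then have "ennreal (1/m) * emeasure M1 S = ennreal (1/m) * emeasure M2 S"
      unfolding P1_def P2_def using S s1 s2 by (simp add: emeasure_density_const)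
    then show ?thesis using mpos
      by (metis ennreal_eq_0_iff ennreal_mult_left_cong ennreal_neq_top linorder_not_less mult.commute
          ennreal_mult_cancel_left zero_less_divide_1_iff) 
  qed
qed

lemma FU:
  assumes fA1: "finite_measure A1" and fA2: "finite_measure A2" and fB1: "finite_measure B1" and fB2: "finite_measure B2"
    and sA1: "sets A1 = sets borel" and sA2: "sets A2 = sets borel" and sB1: "sets B1 = sets borel" and sB2: "sets B2 = sets borel"
    and ch: "\<And>w. char A1 w + char B1 w = char A2 w + char B2 w" and S: "S \<in> sets borel"
  shows "emeasure A1 S + emeasure B1 S = emeasure A2 S + emeasure B2 S"
proof -
  have "emeasure (addm A1 B1) S = emeasure (addm A2 B2) S"
    by (rule FU_prob) (use fA1 fA2 fB1 fB2 sA1 sA2 sB1 sB2 ch S in \<open>simp_all add: finite_addm char_addm\<close>)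
  then show ?thesis using S sA1 sA2 sB1 sB2 by (simp add: emeasure_addm)
qed



definition fc :: "real \<Rightarrow> nat \<times> real \<Rightarrow> real" where
  "fc w = (\<lambda>p. cos (w * snd p))"

definition fs :: "(nat \<Rightarrow> real) \<Rightarrow> real \<Rightarrow> nat \<times> real \<Rightarrow> real" where
  "fs B w = (\<lambda>p. B (fst p) * sin (w * snd p))"

lemma Gset_snd: "x \<in> Gset N \<Longrightarrow> snd x \<ge> 0"
  by (auto simp: Gset_def)

lemma Gset_fst: "x \<in> Gset N \<Longrightarrow> fst x \<le> N"
  by (auto simp: Gset_def)

lemma gdist_ge: "x \<in> Gset N \<Longrightarrow> y \<in> Gset N \<Longrightarrow> \<bar>snd y - snd x\<bar> \<le> gdist x y"
  by (auto simp: gdist_def Gset_def)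

lemma gcontI_lip:
  assumes K: "K \<ge> 0" and L: "\<And>x y. x \<in> Gset N \<Longrightarrow> y \<in> Gset N \<Longrightarrow> \<bar>f y - f x\<bar> \<le> K * gdist x y"
  shows "gcont N f"
  unfolding gcont_def
proof (intro ballI allI impI)
  fix x e assume x: "x \<in> Gset N" and e: "(e::real) > 0"
  show "\<exists>d>0. \<forall>y\<in>Gset N. gdist x y < d \<longrightarrow> \<bar>f y - f x\<bar> < e"
  proof (intro exI conjI ballI impI)
    show "e / (K + 1) > 0" using e K by simp
    fix y assume y: "y \<in> Gset N" and d: "gdist x y < e / (K + 1)"
    have g0: "gdist x y \<ge> 0" using gdist_ge[OF x y] by linarith
    have "\<bar>f y - f x\<bar> \<le> K * gdist x y" by (rule L[OF x y])
    also have "\<dots> \<le> (K + 1) * gdist x y" using g0 by (simp add: distrib_right)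
    also have "\<dots> < (K + 1) * (e / (K + 1))" using d K by (intro mult_strict_left_mono) auto
    also have "\<dots> = e" using K by simp
    finally show "\<bar>f y - f x\<bar> < e" .
  qed
qed

lemma sin_lip: "\<bar>sin (a::real) - sin b\<bar> \<le> \<bar>a - b\<bar>"
proof -
  have s: "\<bar>sin ((a - b) / 2)\<bar> \<le> \<bar>a - b\<bar> / 2" using abs_sin_x_le_abs_x[of "(a-b)/2"] by simp
  have "\<bar>sin a - sin b\<bar> = 2 * \<bar>sin ((a - b) / 2)\<bar> * \<bar>cos ((a + b) / 2)\<bar>"
    by (simp add: sin_diff_sin abs_mult)
  also have "\<dots> \<le> 2 * \<bar>sin ((a - b) / 2)\<bar> * 1"
    by (intro mult_left_mono) auto
  finally show ?thesis using s by simp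
qed

lemma cos_lip: "\<bar>cos (a::real) - cos b\<bar> \<le> \<bar>a - b\<bar>"
proof -
  have s: "\<bar>sin ((b - a) / 2)\<bar> \<le> \<bar>a - b\<bar> / 2" using abs_sin_x_le_abs_x[of "(b-a)/2"] by simp
  have "\<bar>cos a - cos b\<bar> = 2 * \<bar>sin ((a + b) / 2)\<bar> * \<bar>sin ((b - a) / 2)\<bar>"
    by (simp add: cos_diff_cos abs_mult)
  also have "\<dots> \<le> 2 * 1 * \<bar>sin ((b - a) / 2)\<bar>"
    by (intro mult_right_mono mult_left_mono) auto
  finally show ?thesis using s by simp
qed

lemma fbr_fc: "fbr (fc w) i = (\<lambda>h. cos (w * h))"
  by (auto simp: fbr_def fc_def gpt_def)

lemma fbr_fs: "fbr (fs B w) i = (\<lambda>h. B i * sin (w * h))"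
  by (auto simp: fbr_def fs_def gpt_def)

lemma D1_fc: "D1 (fc w) i = (\<lambda>h. - (w * sin (w * h)))"
  unfolding D1_def fbr_fc
  by (rule ext, rule DERIV_imp_deriv) (auto intro!: derivative_eq_intros)

lemma D2_fc: "D2 (fc w) i = (\<lambda>h. - (w^2 * cos (w * h)))"
  unfolding D2_def D1_fc
  by (rule ext, rule DERIV_imp_deriv) (auto intro!: derivative_eq_intros simp: power2_eq_square)

lemma D1_fs: "D1 (fs B w) i = (\<lambda>h. B i * (w * cos (w * h)))"
  unfolding D1_def fbr_fs
  by (rule ext, rule DERIV_imp_deriv) (auto intro!: derivative_eq_intros)

lemma D2_fs: "D2 (fs B w) i = (\<lambda>h. - (B i * w^2 * sin (w * h)))"
  unfolding D2_def D1_fs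
  by (rule ext, rule DERIV_imp_deriv) (auto intro!: derivative_eq_intros simp: power2_eq_square)

lemma tend_right0': "continuous_on UNIV g \<Longrightarrow> (g \<longlongrightarrow> g 0) (at_right (0::real))"
proof -
  assume "continuous_on UNIV g"
  then have "isCont g 0" by (simp add: continuous_on_eq_continuous_at)
  then have "(g \<longlongrightarrow> g 0) (at 0)" by (simp add: isCont_def)
  then show ?thesis by (rule tendsto_mono[rotated]) (simp add: at_le)
qed

lemma Lim_right0: "continuous_on UNIV g \<Longrightarrow> Lim (at_right (0::real)) g = g 0"
  by (intro tendsto_Lim tend_right0') (auto simp: trivial_limit_at_right_real)

lemma bounded_img: "(\<And>x. \<bar>g x\<bar> \<le> (C::real)) \<Longrightarrow> bounded (g ` S)"
  unfolding bounded_iff by (auto)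

lemma tend_right0: "continuous_on UNIV g \<Longrightarrow> \<exists>L. (g \<longlongrightarrow> L) (at_right (0::real))"
  using tend_right0' by blast

lemma gcont_fc: "gcont N (fc w)"
proof (rule gcontI_lip[of "\<bar>w\<bar>"])
  fix x y assume x: "x \<in> Gset N" and y: "y \<in> Gset N"
  have "\<bar>fc w y - fc w x\<bar> \<le> \<bar>w * snd y - w * snd x\<bar>" unfolding fc_def by (simp add: cos_lip)
  also have "\<dots> = \<bar>w\<bar> * \<bar>snd y - snd x\<bar>" by (simp add: abs_mult right_diff_distrib[symmetric])
  also have "\<dots> \<le> \<bar>w\<bar> * gdist x y" by (intro mult_left_mono gdist_ge[OF x y]) simp
  finally show "\<bar>fc w y - fc w x\<bar> \<le> \<bar>w\<bar> * gdist x y" .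
qed simp

lemma diffI: "(f has_real_derivative D) (at x) \<Longrightarrow> f differentiable at x"
  by (auto simp: real_differentiable_def)

lemma abs_sin_mult_le: "\<bar>(c::real) * sin x\<bar> \<le> \<bar>c\<bar>"
  by (simp add: abs_mult mult_left_le)
lemma abs_cos_mult_le: "\<bar>(c::real) * cos x\<bar> \<le> \<bar>c\<bar>"
  by (simp add: abs_mult mult_left_le)

lemma fc_Dal: "fc w \<in> Dal N \<alpha>"
proof -
  have d1: "fbr (fc w) i differentiable at h" for i h
    unfolding fbr_fc by (rule diffI) (rule derivative_eq_intros refl)+
  have d2: "D1 (fc w) i differentiable at h" for i h
    unfolding D1_fc by (rule diffI) (rule derivative_eq_intros refl)+
  have b1: "bounded (D1 (fc w) i ` S)" for i S
    unfolding D1_fc by (rule bounded_img[of _ "\<bar>w\<bar>"]) (simp add: abs_sin_mult_le[of w, simplified abs_minus_cancel])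
  have b2: "bounded (D2 (fc w) i ` S)" for i S
    unfolding D2_fc by (rule bounded_img[of _ "\<bar>w^2\<bar>"]) (metis abs_minus_cancel abs_cos_mult_le abs_power2)
  have c1: "continuous_on S (D1 (fc w) i)" for i S unfolding D1_fc by (intro continuous_intros)
  have c2: "continuous_on S (D2 (fc w) i)" for i S unfolding D2_fc by (intro continuous_intros)
  have l1: "\<exists>L. (D1 (fc w) i \<longlongrightarrow> L) (at_right 0)" for i unfolding D1_fc by (intro tend_right0 continuous_intros)
  have l2: "\<exists>L. (D2 (fc w) i \<longlongrightarrow> L) (at_right 0)" for i unfolding D2_fc by (intro tend_right0 continuous_intros)
  have L: "Lim (at_right 0) (D1 (fc w) i) = 0" for i
    unfolding D1_fc by (subst Lim_right0) (auto intro!: continuous_intros)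
  show ?thesis unfolding Dal_def C2b_def
    using gcont_fc d1 d2 b1 b2 c1 c2 l1 l2 L by auto
qed


lemma gcont_fs: "gcont N (fs B w)"
proof (rule gcontI_lip[of "\<bar>w\<bar> * (\<Sum>k\<le>N. \<bar>B k\<bar>)"])
  let ?M = "\<Sum>k\<le>N. \<bar>B k\<bar>"
  have BM: "k \<le> N \<Longrightarrow> \<bar>B k\<bar> \<le> ?M" for k
    by (rule member_le_sum[where f="\<lambda>k. \<bar>B k\<bar>"]) auto
  fix x y assume x: "x \<in> Gset N" and y: "y \<in> Gset N"
  have a: "snd x \<ge> 0" "snd y \<ge> 0" using Gset_snd x y by auto
  have bx: "\<bar>B (fst x)\<bar> \<le> ?M" and bY: "\<bar>B (fst y)\<bar> \<le> ?M" using BM Gset_fst x y by auto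
  show "\<bar>fs B w y - fs B w x\<bar> \<le> \<bar>w\<bar> * ?M * gdist x y"
  proof (cases "fst x = fst y")
    case True
    have "\<bar>fs B w y - fs B w x\<bar> = \<bar>B (fst y)\<bar> * \<bar>sin (w * snd y) - sin (w * snd x)\<bar>"
      unfolding fs_def using True by (simp add: abs_mult right_diff_distrib[symmetric])
    also have "\<dots> \<le> ?M * (\<bar>w\<bar> * gdist x y)"
    proof (rule mult_mono)
      have "\<bar>sin (w * snd y) - sin (w * snd x)\<bar> \<le> \<bar>w * snd y - w * snd x\<bar>" by (rule sin_lip)
      also have "\<dots> = \<bar>w\<bar> * \<bar>snd y - snd x\<bar>" by (simp add: abs_mult right_diff_distrib[symmetric])
      also have "\<dots> \<le> \<bar>w\<bar> * gdist x y" by (intro mult_left_mono gdist_ge[OF x y]) simp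
      finally show "\<bar>sin (w * snd y) - sin (w * snd x)\<bar> \<le> \<bar>w\<bar> * gdist x y" .
    qed (use bY in auto)
    finally show ?thesis by (simp add: algebra_simps)
  next
    case False
    then have g: "gdist x y = snd x + snd y" by (simp add: gdist_def)
    have "\<bar>fs B w y - fs B w x\<bar> \<le> \<bar>B (fst y)\<bar> * \<bar>sin (w * snd y)\<bar> + \<bar>B (fst x)\<bar> * \<bar>sin (w * snd x)\<bar>"
      unfolding fs_def by (simp add: abs_mult[symmetric] abs_triangle_ineq4)
    also have "\<dots> \<le> ?M * (\<bar>w\<bar> * snd y) + ?M * (\<bar>w\<bar> * snd x)"
    proof (intro add_mono mult_mono)
      show "\<bar>sin (w * snd y)\<bar> \<le> \<bar>w\<bar> * snd y" using abs_sin_x_le_abs_x[of "w * snd y"] a by (simp add: abs_mult)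
      show "\<bar>sin (w * snd x)\<bar> \<le> \<bar>w\<bar> * snd x" using abs_sin_x_le_abs_x[of "w * snd x"] a by (simp add: abs_mult)
    qed (use bx bY a in auto)
    also have "\<dots> = \<bar>w\<bar> * ?M * gdist x y" unfolding g by (simp add: algebra_simps)
    finally show ?thesis .
  qed
qed simp

lemma fs_Dal: assumes "(\<Sum>i=1..N. \<alpha> i * B i) = 0" shows "fs B w \<in> Dal N \<alpha>"
proof -
  have d1: "fbr (fs B w) i differentiable at h" for i h
    unfolding fbr_fs by (rule diffI) (rule derivative_eq_intros refl)+
  have d2: "D1 (fs B w) i differentiable at h" for i h
    unfolding D1_fs by (rule diffI) (rule derivative_eq_intros refl)+
  have b1: "bounded (D1 (fs B w) i ` S)" for i S
    unfolding D1_fs by (rule bounded_img[of _ "\<bar>B i * w\<bar>"]) (metis abs_cos_mult_le mult.assoc)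
  have b2: "bounded (D2 (fs B w) i ` S)" for i S
    unfolding D2_fs by (rule bounded_img[of _ "\<bar>B i * w^2\<bar>"]) (metis abs_minus_cancel abs_sin_mult_le)
  have c1: "continuous_on S (D1 (fs B w) i)" for i S unfolding D1_fs by (intro continuous_intros)
  have c2: "continuous_on S (D2 (fs B w) i)" for i S unfolding D2_fs by (intro continuous_intros)
  have l1: "\<exists>L. (D1 (fs B w) i \<longlongrightarrow> L) (at_right 0)" for i unfolding D1_fs by (intro tend_right0 continuous_intros)
  have l2: "\<exists>L. (D2 (fs B w) i \<longlongrightarrow> L) (at_right 0)" for i unfolding D2_fs by (intro tend_right0 continuous_intros)
  have L: "Lim (at_right 0) (D1 (fs B w) i) = B i * w" for i
    unfolding D1_fs by (subst Lim_right0) (auto intro!: continuous_intros)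
  have S: "(\<Sum>i=1..N. \<alpha> i * (B i * w)) = 0"
    using assms by (simp add: mult.assoc[symmetric] sum_distrib_right[symmetric])
  show ?thesis unfolding Dal_def C2b_def
    using gcont_fs d1 d2 b1 b2 c1 c2 l1 l2 L S by auto
qed

lemma fpp_fc: "fpp N (fc w) = (\<lambda>p. - (w^2) * fc w p)"
proof
  fix p :: "nat \<times> real"
  show "fpp N (fc w) p = - (w^2) * fc w p"
  proof (cases "snd p = 0")
    case True
    then show ?thesis unfolding fpp_def D2_fc
      by (subst Lim_right0) (auto intro!: continuous_intros simp: fc_def)
  qed (unfold fpp_def D2_fc, simp add: fc_def)
qed

lemma fpp_fs: "fpp N (fs B w) = (\<lambda>p. - (w^2) * fs B w p)"
proof
  fix p :: "nat \<times> real"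
  show "fpp N (fs B w) p = - (w^2) * fs B w p"
  proof (cases "snd p = 0")
    case True
    then show ?thesis unfolding fpp_def D2_fs
      by (subst Lim_right0) (auto intro!: continuous_intros simp: fs_def)
  qed (unfold fpp_def D2_fs, simp add: fs_def)
qed



lemma ode_exp:
  fixes g :: "real \<Rightarrow> real"
  assumes T: "T \<ge> 0" and ig: "g integrable_on {0..T}"
    and eqn: "\<And>t. 0 \<le> t \<Longrightarrow> t \<le> T \<Longrightarrow> g t = g0 + k * integral {0..t} g"
  shows "g T = g0 * exp (k * T)"
proof -
  let ?G = "\<lambda>t. integral {0..t} g"
  have cG: "continuous_on {0..T} ?G" by (rule indefinite_integral_continuous_1[OF ig])
  have cg: "continuous_on {0..T} g"
  proof -
    have "continuous_on {0..T} (\<lambda>t. g0 + k * ?G t)" by (intro continuous_intros cG)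
    then show ?thesis by (rule continuous_on_eq) (use eqn in auto)
  qed
  let ?H = "\<lambda>t. (g0 + k * ?G t) * exp (- k * t)"
  have dH: "(?H has_field_derivative 0) (at t within {0..T})" if t: "t \<in> {0..T}" for t
  proof -
    have dG: "(?G has_real_derivative g t) (at t within {0..T})"
      by (rule integral_has_real_derivative[OF cg t])
    have "(?H has_field_derivative (k * g t) * exp (- k * t) + (g0 + k * ?G t) * (exp (- k * t) * (- k))) (at t within {0..T})"
      using dG by (auto intro!: derivative_eq_intros)
    moreover have "(k * g t) * exp (- k * t) + (g0 + k * ?G t) * (exp (- k * t) * (- k)) = 0"
      using eqn[of t] t by (simp add: algebra_simps)
    ultimately show ?thesis by (metis (no_types, lifting))
  qed
  obtain c where c: "\<forall>x\<in>{0..T}. ?H x = c"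
    using has_field_derivative_zero_constant[of "{0..T}" ?H] dH by auto
  have "?H 0 = g0" by simp
  then have "?H T = g0" using c T by force
  moreover have "g T = g0 + k * ?G T" using eqn[of T] T by simp
  ultimately have "g T * exp (- k * T) = g0" by simp
  then show ?thesis by (simp add: exp_minus field_simps)
qed



lemma borelG_sets: "sets (borel :: (nat \<times> real) measure) = sets (count_space UNIV \<Otimes>\<^sub>M borel)"
proof -
  have "sets (borel :: (nat \<times> real) measure) = sets ((borel::nat measure) \<Otimes>\<^sub>M (borel::real measure))"
    by (simp only: borel_prod)
  also have "\<dots> = sets (count_space UNIV \<Otimes>\<^sub>M borel)"
    by (rule sets_pair_measure_cong) (simp_all add: sets_borel_eq_count_space)
  finally show ?thesis .
qed

lemma borelG_meas: "borel_measurable (borel :: (nat \<times> real) measure) = borel_measurable (count_space UNIV \<Otimes>\<^sub>M borel)"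
  by (rule measurable_cong_sets[OF borelG_sets refl])

lemma snd_meas: "snd \<in> borel_measurable (borel :: (nat \<times> real) measure)"
  unfolding borelG_meas by measurable

lemma test: "(\<lambda>p::nat\<times>real. B (fst p) * sin (w * snd p)) \<in> borel_measurable borel"
  unfolding borelG_meas by measurable

lemma br: "{p::nat\<times>real. fst p = i \<and> snd p > 0} \<in> sets borel"
proof -
  have "{p::nat\<times>real. fst p = i \<and> snd p > 0} = {i} \<times> {0<..}" by auto
  also have "\<dots> \<in> sets (count_space UNIV \<Otimes>\<^sub>M borel)" by (intro pair_measureI) auto
  finally show ?thesis unfolding borelG_sets .
qed



lemmas Re_char' = Re_char[OF refl refl]
lemmas Im_char' = Im_char[OF refl refl]

lemma refl_facts:
  fixes P :: "real measure"
  assumes f: "finite_measure P" and s: "sets P = sets borel"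
  shows "finite_measure (distr P borel uminus)" "sets (distr P borel uminus) = sets borel"
    "Re (char (distr P borel uminus) w) = (\<integral>x. cos (w * x) \<partial>P)"
    "Im (char (distr P borel uminus) w) = - (\<integral>x. sin (w * x) \<partial>P)"
    "S \<in> sets borel \<Longrightarrow> emeasure (distr P borel uminus) S = emeasure P (uminus -` S)"
proof -
  have m0: "(uminus::real\<Rightarrow>real) \<in> borel_measurable borel" by measurable
  have m: "uminus \<in> measurable P (borel :: real measure)"
    using measurable_ident_sets[OF s] by simp
  show fd: "finite_measure (distr P borel uminus)" using f m by (rule finite_measure.finite_measure_distr)
  show sd: "sets (distr P borel uminus) = sets borel" by simp
  have cm: "(\<lambda>x. cos (w * x)) \<in> borel_measurable (borel::real measure)" "(\<lambda>x. sin (w * x)) \<in> borel_measurable (borel::real measure)" by auto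
  show "Re (char (distr P borel uminus) w) = (\<integral>x. cos (w * x) \<partial>P)"
    using Re_char'[OF fd sd] integral_distr[OF m cm(1)] by simp
  show "Im (char (distr P borel uminus) w) = - (\<integral>x. sin (w * x) \<partial>P)"
    using Im_char'[OF fd sd] integral_distr[OF m cm(2)] by simp
  assume S: "S \<in> sets borel"
  show "emeasure (distr P borel uminus) S = emeasure P (uminus -` S)"
    using emeasure_distr[OF m, of S] S sets_eq_imp_space_eq[OF s] by simp
qed

lemma SU:
  fixes P Q :: "real measure"
  assumes fP: "finite_measure P" and fQ: "finite_measure Q"
    and sP: "sets P = sets borel" and sQ: "sets Q = sets borel"
    and P0: "emeasure P {..0} = 0" and Q0: "emeasure Q {..0} = 0"
    and sn: "\<And>w. (\<integral>x. sin (w * x) \<partial>P) = (\<integral>x. sin (w * x) \<partial>Q)"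
  shows "P = Q"
proof (rule measure_eqI)
  show "sets P = sets Q" using sP sQ by simp
  fix S assume "S \<in> sets P"
  then have S: "S \<in> sets borel" using sP by simp
  define S' where "S' = S \<inter> {0<..}"
  have S'b: "S' \<in> sets borel" unfolding S'_def by (intro sets.Int S) simp
  have nS': "uminus -` S' \<subseteq> {..0}" by (auto simp: S'_def)
  have "emeasure P S' + emeasure (distr Q borel uminus) S' = emeasure Q S' + emeasure (distr P borel uminus) S'"
  proof (rule FU)
    show "finite_measure P" "finite_measure Q" "sets P = sets borel" "sets Q = sets borel" by fact+
    show "finite_measure (distr Q borel uminus)" "finite_measure (distr P borel uminus)"
      "sets (distr Q borel uminus) = sets borel" "sets (distr P borel uminus) = sets borel"
      using refl_facts fP fQ sP sQ by auto
    show "S' \<in> sets borel" by fact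
    fix w
    show "char P w + char (distr Q borel uminus) w = char Q w + char (distr P borel uminus) w"
      using refl_facts(3,4)[OF fP sP, of w] refl_facts(3,4)[OF fQ sQ, of w] Re_char'[OF fP sP, of w] Re_char'[OF fQ sQ, of w]
        Im_char'[OF fP sP, of w] Im_char'[OF fQ sQ, of w] sn[of w]
      by (simp add: complex_eq_iff)
  qed
  moreover have "emeasure (distr Q borel uminus) S' = 0"
    using refl_facts(5)[OF fQ sQ S'b] emeasure_mono[OF nS', of Q] sQ Q0 by simp
  moreover have "emeasure (distr P borel uminus) S' = 0"
    using refl_facts(5)[OF fP sP S'b] emeasure_mono[OF nS', of P] sP P0 by simp
  ultimately have eq: "emeasure P S' = emeasure Q S'" by simp
  have "emeasure P S = emeasure P S' + emeasure P (S \<inter> {..0})"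
    using S sP by (subst plus_emeasure) (auto simp: S'_def intro!: arg_cong[where f="emeasure P"])
  moreover have "emeasure Q S = emeasure Q S' + emeasure Q (S \<inter> {..0})"
    using S sQ by (subst plus_emeasure) (auto simp: S'_def intro!: arg_cong[where f="emeasure Q"])
  moreover have "emeasure P (S \<inter> {..0}) = 0" using emeasure_mono[of "S \<inter> {..0}" "{..0}" P] P0 sP by simp
  moreover have "emeasure Q (S \<inter> {..0}) = 0" using emeasure_mono[of "S \<inter> {..0}" "{..0}" Q] Q0 sQ by simp
  ultimately show "emeasure P S = emeasure Q S" using eq by simp
qed

lemma CU:
  fixes P Q :: "real measure"
  assumes fP: "finite_measure P" and fQ: "finite_measure Q"
    and sP: "sets P = sets borel" and sQ: "sets Q = sets borel"
    and P0: "emeasure P {..<0} = 0" and Q0: "emeasure Q {..<0} = 0"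
    and cs: "\<And>w. (\<integral>x. cos (w * x) \<partial>P) = (\<integral>x. cos (w * x) \<partial>Q)"
  shows "P = Q"
proof (rule measure_eqI)
  show "sets P = sets Q" using sP sQ by simp
  have key: "emeasure P S + emeasure (distr P borel uminus) S = emeasure Q S + emeasure (distr Q borel uminus) S"
    if S: "S \<in> sets borel" for S
  proof (rule FU[of P Q "distr P borel uminus" "distr Q borel uminus"])
    show "finite_measure P" "finite_measure Q" "sets P = sets borel" "sets Q = sets borel" by fact+
    show "finite_measure (distr Q borel uminus)" "finite_measure (distr P borel uminus)"
      "sets (distr Q borel uminus) = sets borel" "sets (distr P borel uminus) = sets borel"
      using refl_facts fP fQ sP sQ by auto
    show "S \<in> sets borel" by fact
    fix w
    show "char P w + char (distr P borel uminus) w = char Q w + char (distr Q borel uminus) w"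
      using refl_facts(3,4)[OF fP sP, of w] refl_facts(3,4)[OF fQ sQ, of w] Re_char'[OF fP sP, of w] Re_char'[OF fQ sQ, of w]
        Im_char'[OF fP sP, of w] Im_char'[OF fQ sQ, of w] cs[of w]
      by (simp add: complex_eq_iff)
  qed
  fix S assume "S \<in> sets P"
  then have S: "S \<in> sets borel" using sP by simp
  define S1 where "S1 = S \<inter> {0<..}"
  have S1b: "S1 \<in> sets borel" unfolding S1_def by (intro sets.Int S) simp
  have nS1: "uminus -` S1 \<subseteq> {..<0}" by (auto simp: S1_def)
  have e1: "emeasure P S1 = emeasure Q S1"
  proof -
    have "emeasure (distr Q borel uminus) S1 = 0"
      using refl_facts(5)[OF fQ sQ S1b] emeasure_mono[OF nS1, of Q] sQ Q0 by simp
    moreover have "emeasure (distr P borel uminus) S1 = 0"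
      using refl_facts(5)[OF fP sP S1b] emeasure_mono[OF nS1, of P] sP P0 by simp
    ultimately show ?thesis using key[OF S1b] by simp
  qed
  have e0: "emeasure P {0} = emeasure Q {0}"
  proof -
    have u0: "uminus -` {0::real} = {0}" by auto
    have "emeasure (distr Q borel uminus) {0} = emeasure Q {0}"
      using refl_facts(5)[OF fQ sQ, of "{0}"] u0 by simp
    moreover have "emeasure (distr P borel uminus) {0} = emeasure P {0}"
      using refl_facts(5)[OF fP sP, of "{0}"] u0 by simp
    ultimately have "2 * emeasure P {0} = 2 * emeasure Q {0}" using key[of "{0}"] by (simp add: mult_2)
    then show ?thesis by (simp add: ennreal_mult_cancel_left)
  qed
  have split: "emeasure M S = emeasure M S1 + (if 0 \<in> S then emeasure M {0} else 0)"
    if sM: "sets M = sets borel" and M0: "emeasure M {..<0} = 0" for M :: "real measure"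
  proof -
    have n: "emeasure M (S \<inter> {..<0}) = 0" using emeasure_mono[of "S \<inter> {..<0}" "{..<0}" M] M0 sM by simp
    have "emeasure M S = emeasure M (S \<inter> {..<0}) + emeasure M (S - {..<0})"
      using S sM by (subst plus_emeasure) (auto intro!: arg_cong[where f="emeasure M"])
    also have "S - {..<0} = S1 \<union> (S \<inter> {0})" by (auto simp: S1_def)
    also have "emeasure M (S1 \<union> (S \<inter> {0})) = emeasure M S1 + emeasure M (S \<inter> {0})"
      using S sM by (subst plus_emeasure[symmetric]) (auto simp: S1_def)
    finally show ?thesis using n by auto
  qed
  show "emeasure P S = emeasure Q S" using split[OF sP P0] split[OF sQ Q0] e1 e0 by simp
qed



lemma integrable_ind_mult:
  fixes f :: "'a \<Rightarrow> real"
  shows "A \<in> sets M \<Longrightarrow> integrable M f \<Longrightarrow> integrable M (\<lambda>x. indicator A x * f x)"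
  using integrable_mult_indicator[of A M f] by simp

lemma half_line:
  fixes F :: "real \<Rightarrow> real"
  assumes F: "integrable lborel F"
  shows "(\<integral>z. F z \<partial>lborel) = (\<integral>z. indicator {0<..} z * (F z + F (- z)) \<partial>lborel)"
proof -
  have Fm[measurable]: "F \<in> borel_measurable borel" using F by auto
  have Fr: "integrable lborel (\<lambda>z. F (- z))"
    using lborel_integrable_real_affine[OF F, of "-1" 0] by simp
  have i1: "integrable lborel (\<lambda>z. indicator {0<..} z * F z)"
    using F by (intro integrable_ind_mult) auto
  have i2: "integrable lborel (\<lambda>z. indicator {..0} z * F z)"
    using F by (intro integrable_ind_mult) auto
  have i3: "integrable lborel (\<lambda>z. indicator {0<..} z * F (- z))"
    using Fr by (intro integrable_ind_mult) auto
  have "(\<integral>z. F z \<partial>lborel) = (\<integral>z. indicator {0<..} z * F z + indicator {..0} z * F z \<partial>lborel)"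
    by (intro Bochner_Integration.integral_cong) (auto split: split_indicator)
  also have "\<dots> = (\<integral>z. indicator {0<..} z * F z \<partial>lborel) + (\<integral>z. indicator {..0} z * F z \<partial>lborel)"
    using i1 i2 by simp
  also have "(\<integral>z. indicator {..0} z * F z \<partial>lborel) = (\<integral>u. indicator {..0} (- u) * F (- u) \<partial>lborel)"
    using lborel_integral_real_affine[of "-1" "\<lambda>z. indicator {..0} z * F z" 0] by simp
  also have "\<dots> = (\<integral>u. indicator {0<..} u * F (- u) \<partial>lborel)"
  proof (rule integral_cong_AE)
    show "(\<lambda>u. indicator {..0} (- u) * F (- u)) \<in> borel_measurable lborel" by measurable
    show "(\<lambda>u. indicator {0<..} u * F (- u)) \<in> borel_measurable lborel" by measurable
    show "AE u in lborel. indicator {..0} (- u) * F (- u) = indicator {0<..} u * F (- u)"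
      using AE_lborel_singleton[of "0::real"] by eventually_elim (auto split: split_indicator)
  qed
  also have "(\<integral>z. indicator {0<..} z * F z \<partial>lborel) + \<dots> = (\<integral>z. indicator {0<..} z * F z + indicator {0<..} z * F (- z) \<partial>lborel)"
    using i1 i3 by simp
  also have "\<dots> = (\<integral>z. indicator {0<..} z * (F z + F (- z)) \<partial>lborel)"
    by (simp add: distrib_left)
  finally show ?thesis .
qed


definition dens :: "(nat \<Rightarrow> real) \<Rightarrow> real \<Rightarrow> nat \<times> real \<Rightarrow> nat \<Rightarrow> real \<Rightarrow> real" where
  "dens \<alpha> t x i z = 2 * \<alpha> i * gauss t (snd x + z) +
     (if i = fst x then gauss t (snd x - z) - gauss t (snd x + z) else 0)"

lemma gauss_mono: "t > 0 \<Longrightarrow> h \<ge> 0 \<Longrightarrow> z \<ge> 0 \<Longrightarrow> gauss t (h + z) \<le> gauss t (h - z)"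
proof -
  assume t: "t > 0" and h: "h \<ge> 0" and z: "z \<ge> 0"
  have "(h - z)^2 \<le> (h + z)^2" using h z by (simp add: power2_eq_square algebra_simps)
  then have "- ((h + z)^2) / (2 * t) \<le> - ((h - z)^2) / (2 * t)" using t by (simp add: divide_right_mono)
  then have "exp (- ((h + z)^2) / (2 * t)) \<le> exp (- ((h - z)^2) / (2 * t))" by simp
  then show ?thesis unfolding gauss_def using t by (simp add: divide_right_mono)
qed

lemma dens_nonneg:
  assumes "t > 0" "\<alpha> i \<ge> 0" "snd x \<ge> 0" "z \<ge> 0"
  shows "dens \<alpha> t x i z \<ge> 0"
  using assms gauss_mono[of t "snd x" z] gauss_nonneg[of t]
  unfolding dens_def by (auto intro!: add_nonneg_nonneg mult_nonneg_nonneg)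

lemma dens_meas[measurable]: "dens \<alpha> t x i \<in> borel_measurable borel"
  unfolding dens_def by measurable

lemma int_half_p:
  assumes t: "t > 0" and phi[measurable]: "phi \<in> borel_measurable borel" and C: "\<And>z. \<bar>phi z\<bar> \<le> C"
  shows "integrable lborel (\<lambda>z. indicator {0<..} z * gauss t (h + z) * phi z)"
proof -
  have "integrable lborel (\<lambda>z. gauss t (- h - z) * (indicator {0<..} z * phi z))"
    by (rule gauss_integrable_bdd[OF t, where B=C]) (use C in \<open>auto split: split_indicator intro: order_trans[OF _ C]\<close>)
  moreover have "gauss t (- h - z) = gauss t (h + z)" for z
    using gauss_even[of t "h + z"] by simp
  ultimately show ?thesis by (simp add: ac_simps)
qed

lemma int_half_m:
  assumes t: "t > 0" and phi[measurable]: "phi \<in> borel_measurable borel" and C: "\<And>z. \<bar>phi z\<bar> \<le> C"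
  shows "integrable lborel (\<lambda>z. indicator {0<..} z * gauss t (h - z) * phi z)"
proof -
  have "integrable lborel (\<lambda>z. gauss t (h - z) * (indicator {0<..} z * phi z))"
    by (rule gauss_integrable_bdd[OF t, where B=C]) (use C in \<open>auto split: split_indicator intro: order_trans[OF _ C]\<close>)
  then show ?thesis by (simp add: ac_simps)
qed

lemma dens_int:
  assumes t: "t > 0" and phi[measurable]: "phi \<in> borel_measurable borel" and C: "\<And>z. \<bar>phi z\<bar> \<le> C"
  shows "(\<integral>z. indicator {0<..} z * dens \<alpha> t x i z * phi z \<partial>lborel)
    = 2 * \<alpha> i * (\<integral>z. indicator {0<..} z * gauss t (snd x + z) * phi z \<partial>lborel)
      + (if i = fst x then (\<integral>z. indicator {0<..} z * gauss t (snd x - z) * phi z \<partial>lborel)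
             - (\<integral>z. indicator {0<..} z * gauss t (snd x + z) * phi z \<partial>lborel) else 0)"
proof -
  note ip = int_half_p[OF t phi C, of "snd x"] and im = int_half_m[OF t phi C, of "snd x"]
  show ?thesis
  proof (cases "i = fst x")
    case True
    have "(\<integral>z. indicator {0<..} z * dens \<alpha> t x i z * phi z \<partial>lborel)
      = (\<integral>z. 2 * \<alpha> i * (indicator {0<..} z * gauss t (snd x + z) * phi z)
          + (indicator {0<..} z * gauss t (snd x - z) * phi z - indicator {0<..} z * gauss t (snd x + z) * phi z) \<partial>lborel)"
      using True by (intro Bochner_Integration.integral_cong) (auto simp: dens_def algebra_simps)
    also have "\<dots> = 2 * \<alpha> i * (\<integral>z. indicator {0<..} z * gauss t (snd x + z) * phi z \<partial>lborel)
      + ((\<integral>z. indicator {0<..} z * gauss t (snd x - z) * phi z \<partial>lborel)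
             - (\<integral>z. indicator {0<..} z * gauss t (snd x + z) * phi z \<partial>lborel))"
      using ip im by simp
    finally show ?thesis using True by simp
  next
    case False
    have "(\<integral>z. indicator {0<..} z * dens \<alpha> t x i z * phi z \<partial>lborel)
      = (\<integral>z. 2 * \<alpha> i * (indicator {0<..} z * gauss t (snd x + z) * phi z) \<partial>lborel)"
      using False by (intro Bochner_Integration.integral_cong) (auto simp: dens_def algebra_simps)
    also have "\<dots> = 2 * \<alpha> i * (\<integral>z. indicator {0<..} z * gauss t (snd x + z) * phi z \<partial>lborel)"
      by simp
    finally show ?thesis using False by simp
  qed
qed

lemma W_sin:
  assumes t: "t > 0"
  shows "(\<integral>z. indicator {0<..} z * gauss t (h - z) * sin (w * z) \<partial>lborel)
       - (\<integral>z. indicator {0<..} z * gauss t (h + z) * sin (w * z) \<partial>lborel) = exp (- (w^2 * t) / 2) * sin (w * h)"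
proof -
  have F: "integrable lborel (\<lambda>z. gauss t (h - z) * sin (w * z))"
    by (rule gauss_integrable_bdd[OF t, where B=1]) auto
  have "exp (- (w^2 * t) / 2) * sin (w * h) = (\<integral>z. gauss t (h - z) * sin (w * z) \<partial>lborel)"
    using gauss_sin[OF t] by simp
  also have "\<dots> = (\<integral>z. indicator {0<..} z * (gauss t (h - z) * sin (w * z) + gauss t (h - - z) * sin (w * - z)) \<partial>lborel)"
    by (rule half_line[OF F])
  also have "\<dots> = (\<integral>z. indicator {0<..} z * gauss t (h - z) * sin (w * z) - indicator {0<..} z * gauss t (h + z) * sin (w * z) \<partial>lborel)"
    by (intro Bochner_Integration.integral_cong) (auto simp: algebra_simps)
  also have "\<dots> = (\<integral>z. indicator {0<..} z * gauss t (h - z) * sin (w * z) \<partial>lborel)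
       - (\<integral>z. indicator {0<..} z * gauss t (h + z) * sin (w * z) \<partial>lborel)"
    using int_half_p[OF t, of "\<lambda>z. sin (w * z)" 1 h] int_half_m[OF t, of "\<lambda>z. sin (w * z)" 1 h] by simp
  finally show ?thesis by simp
qed

lemma W_cos:
  assumes t: "t > 0"
  shows "(\<integral>z. indicator {0<..} z * gauss t (h - z) * cos (w * z) \<partial>lborel)
       + (\<integral>z. indicator {0<..} z * gauss t (h + z) * cos (w * z) \<partial>lborel) = exp (- (w^2 * t) / 2) * cos (w * h)"
proof -
  have F: "integrable lborel (\<lambda>z. gauss t (h - z) * cos (w * z))"
    by (rule gauss_integrable_bdd[OF t, where B=1]) auto
  have "exp (- (w^2 * t) / 2) * cos (w * h) = (\<integral>z. gauss t (h - z) * cos (w * z) \<partial>lborel)"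
    using gauss_cos[OF t] by simp
  also have "\<dots> = (\<integral>z. indicator {0<..} z * (gauss t (h - z) * cos (w * z) + gauss t (h - - z) * cos (w * - z)) \<partial>lborel)"
    by (rule half_line[OF F])
  also have "\<dots> = (\<integral>z. indicator {0<..} z * gauss t (h - z) * cos (w * z) + indicator {0<..} z * gauss t (h + z) * cos (w * z) \<partial>lborel)"
    by (intro Bochner_Integration.integral_cong) (auto simp: algebra_simps)
  also have "\<dots> = (\<integral>z. indicator {0<..} z * gauss t (h - z) * cos (w * z) \<partial>lborel)
       + (\<integral>z. indicator {0<..} z * gauss t (h + z) * cos (w * z) \<partial>lborel)"
    using int_half_p[OF t, of "\<lambda>z. cos (w * z)" 1 h] int_half_m[OF t, of "\<lambda>z. cos (w * z)" 1 h] by simp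
  finally show ?thesis by simp
qed


lemma heat_fext:
  assumes t: "t > 0" and fm[measurable]: "(\<lambda>z. indicator {0<..} z * f (i, z)) \<in> borel_measurable borel"
  shows "heat t (fext f i) y = (\<integral>z. indicator {0<..} z * gauss t (y - z) * (indicator {0<..} z * f (i, z)) \<partial>lborel)"
proof -
  have "heat t (fext f i) y = (\<integral>z. fext f i z * gauss t (y - z) \<partial>lborel)"
    using t by (simp add: heat_def)
  also have "\<dots> = (\<integral>z. indicator {0<..} z * gauss t (y - z) * (indicator {0<..} z * f (i, z)) \<partial>lborel)"
  proof (rule integral_cong_AE)
    have e: "(\<lambda>z. fext f i z * gauss t (y - z)) = (\<lambda>z. (indicator {0<..} z * f (i, z) + indicator {0} z * f (0,0)) * gauss t (y - z))"
      by (auto simp: fext_def fun_eq_iff gpt_def split: split_indicator)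
    show "(\<lambda>z. fext f i z * gauss t (y - z)) \<in> borel_measurable lborel"
      unfolding e by measurable
    show "(\<lambda>z. indicator {0<..} z * gauss t (y - z) * (indicator {0<..} z * f (i, z))) \<in> borel_measurable lborel"
      by measurable
    show "AE z in lborel. fext f i z * gauss t (y - z) = indicator {0<..} z * gauss t (y - z) * (indicator {0<..} z * f (i, z))"
      using AE_lborel_singleton[of "0::real"] by eventually_elim (auto simp: fext_def gpt_def split: split_indicator)
  qed
  finally show ?thesis .
qed


lemma walshP_rep:
  assumes t: "t > 0" and x: "x \<in> Gset N"
    and fm: "\<And>i. i \<in> {1..N} \<Longrightarrow> (\<lambda>z. indicator {0<..} z * f (i, z)) \<in> borel_measurable borel"
    and fb: "\<And>i z. i \<in> {1..N} \<Longrightarrow> \<bar>indicator {0<..} z * f (i, z)\<bar> \<le> C"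
  shows "walshP N \<alpha> t f x = (\<Sum>i=1..N. \<integral>z. indicator {0<..} z * dens \<alpha> t x i z * (indicator {0<..} z * f (i, z)) \<partial>lborel)"
proof -
  let ?h = "snd x"
  define A where "A i = (\<integral>z. indicator {0<..} z * gauss t (?h + z) * (indicator {0<..} z * f (i, z)) \<partial>lborel)" for i
  define Bv where "Bv i = (\<integral>z. indicator {0<..} z * gauss t (?h - z) * (indicator {0<..} z * f (i, z)) \<partial>lborel)" for i
  have D: "(\<integral>z. indicator {0<..} z * dens \<alpha> t x i z * (indicator {0<..} z * f (i, z)) \<partial>lborel)
     = 2 * \<alpha> i * A i + (if i = fst x then Bv i - A i else 0)" if i: "i \<in> {1..N}" for i
    unfolding A_def Bv_def by (rule dens_int[OF t fm[OF i] fb[OF i]])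
  have Hm: "heat t (fext f i) (- ?h) = A i" if i: "i \<in> {1..N}" for i
  proof -
    have "heat t (fext f i) (- ?h) = (\<integral>z. indicator {0<..} z * gauss t (- ?h - z) * (indicator {0<..} z * f (i, z)) \<partial>lborel)"
      by (rule heat_fext[OF t fm[OF i]])
    also have "\<dots> = A i"
    proof -
      have ge: "gauss t (- ?h - z) = gauss t (?h + z)" for z using gauss_even[of t "?h + z"] by simp
      show ?thesis unfolding A_def by (simp only: ge)
    qed
    finally show ?thesis .
  qed
  have Hp: "heat t (fext f i) ?h = Bv i" if i: "i \<in> {1..N}" for i
    unfolding Bv_def by (rule heat_fext[OF t fm[OF i]])
  have sumD: "(\<Sum>i=1..N. \<integral>z. indicator {0<..} z * dens \<alpha> t x i z * (indicator {0<..} z * f (i, z)) \<partial>lborel)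
      = (\<Sum>i=1..N. 2 * \<alpha> i * A i) + (\<Sum>i=1..N. if i = fst x then Bv i - A i else 0)"
    by (simp add: D sum.distrib)
  show ?thesis
  proof (cases "?h = 0")
    case True
    have fx: "fst x \<notin> {1..N}" using x True by (auto simp: Gset_def)
    have "(\<Sum>i=1..N. if i = fst x then Bv i - A i else 0) = 0"
      using fx by (intro sum.neutral) auto
    moreover have "heat t (fext f i) 0 = A i" if "i \<in> {1..N}" for i using Hm[OF that] True by simp
    ultimately show ?thesis using t True unfolding walshP_def sumD
      by (simp add: sum_distrib_left mult.assoc)
  next
    case False
    have fx: "fst x \<in> {1..N}" using x False by (auto simp: Gset_def)
    have "(\<Sum>i=1..N. if i = fst x then Bv i - A i else 0) = Bv (fst x) - A (fst x)"
      using fx by (simp add: sum.delta')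
    then show ?thesis using t False fx Hm Hp unfolding walshP_def sumD
      by (simp add: sum_distrib_left mult.assoc)
  qed
qed



lemma gpt_Gset: "i \<in> {1..N} \<Longrightarrow> z \<ge> 0 \<Longrightarrow> gpt i z \<in> Gset N"
  by (auto simp: gpt_def Gset_def)

lemma gdist_gpt: "a \<ge> 0 \<Longrightarrow> b \<ge> 0 \<Longrightarrow> i \<ge> 1 \<Longrightarrow> gdist (gpt i a) (gpt i b) = \<bar>a - b\<bar>"
  by (auto simp: gdist_def gpt_def)

lemma C0_branch_cont:
  assumes f: "f \<in> C0 N" and i: "i \<in> {1..N}"
  shows "continuous_on {0..} (\<lambda>z. f (gpt i z))"
  unfolding continuous_on_iff
proof (intro ballI allI impI)
  fix z e assume z: "z \<in> {0::real..}" and e: "(e::real) > 0"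
  have g: "gcont N f" using f by (simp add: C0_def)
  obtain d where d: "d > 0" "\<forall>y\<in>Gset N. gdist (gpt i z) y < d \<longrightarrow> \<bar>f y - f (gpt i z)\<bar> < e"
    using g gpt_Gset[OF i, of z] z e unfolding gcont_def by force
  show "\<exists>d>0. \<forall>x'\<in>{0..}. dist x' z < d \<longrightarrow> dist (f (gpt i x')) (f (gpt i z)) < e"
  proof (intro exI conjI ballI impI)
    show "d > 0" by fact
    fix z' assume z': "z' \<in> {0::real..}" and dz: "dist z' z < d"
    have "gdist (gpt i z) (gpt i z') < d" using gdist_gpt[of z z' i] z z' i dz by (simp add: dist_real_def abs_minus_commute)
    then show "dist (f (gpt i z')) (f (gpt i z)) < e"
      using d(2) gpt_Gset[OF i, of z'] z' by (simp add: dist_real_def)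
  qed
qed

lemma C0_branch_meas:
  assumes f: "f \<in> C0 N" and i: "i \<in> {1..N}"
  shows "(\<lambda>z. indicator {0<..} z * f (i, z)) \<in> borel_measurable borel"
proof -
  have "continuous_on {0<..} (\<lambda>z. f (gpt i z))"
    by (rule continuous_on_subset[OF C0_branch_cont[OF f i]]) auto
  then have "continuous_on {0<..} (\<lambda>z. f (i, z))"
    by (rule continuous_on_eq) (auto simp: gpt_def)
  then have "(\<lambda>z. indicator {0<..} z *\<^sub>R f (i, z)) \<in> borel_measurable borel"
    by (intro borel_measurable_continuous_on_indicator) auto
  then show ?thesis by simp
qed

lemma C0_bounded:
  assumes f: "f \<in> C0 N"
  shows "\<exists>C. \<forall>p\<in>Gset N. \<bar>f p\<bar> \<le> C"
proof -
  obtain R where R: "\<forall>y\<in>Gset N. snd y > R \<longrightarrow> \<bar>f y\<bar> < 1"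
  proof -
    have "\<forall>e>0. \<exists>R. \<forall>y\<in>Gset N. R < snd y \<longrightarrow> \<bar>f y\<bar> < e" using f unfolding C0_def by simp
    then have "\<exists>R. \<forall>y\<in>Gset N. R < snd y \<longrightarrow> \<bar>f y\<bar> < 1" by simp
    then show ?thesis using that by blast
  qed
  have "\<exists>C. \<forall>z\<in>{0..max R 0}. \<bar>f (gpt i z)\<bar> \<le> C" if i: "i \<in> {1..N}" for i
  proof -
    have "compact ((\<lambda>z. f (gpt i z)) ` {0..max R 0})"
      by (rule compact_continuous_image) (auto intro: continuous_on_subset[OF C0_branch_cont[OF f i]])
    then have "bounded ((\<lambda>z. f (gpt i z)) ` {0..max R 0})" by (rule compact_imp_bounded)
    then show ?thesis unfolding bounded_iff by auto
  qed
  then obtain C where C: "\<And>i z. i \<in> {1..N} \<Longrightarrow> z \<in> {0..max R 0} \<Longrightarrow> \<bar>f (gpt i z)\<bar> \<le> C i"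
    by metis
  define D where "D = 1 + \<bar>f (0,0)\<bar> + (\<Sum>i\<in>{1..N}. \<bar>C i\<bar>)"
  have Ci: "C i \<le> (\<Sum>i\<in>{1..N}. \<bar>C i\<bar>)" if "i \<in> {1..N}" for i
    using member_le_sum[of i "{1..N}" "\<lambda>i. \<bar>C i\<bar>"] that by auto
  have "\<bar>f p\<bar> \<le> D" if p: "p \<in> Gset N" for p
  proof (cases "snd p > R")
    case True
    have "\<bar>f p\<bar> < 1" using R p True by blast
    moreover have "0 \<le> (\<Sum>i\<in>{1..N}. \<bar>C i\<bar>)" by (rule sum_nonneg) simp
    ultimately show ?thesis unfolding D_def by linarith
  next
    case False
    show ?thesis
    proof (cases "p = (0,0)")
      case True then show ?thesis by (simp add: D_def sum_nonneg)
    next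
      case nz: False
      then have pi: "fst p \<in> {1..N}" "snd p > 0" "p = gpt (fst p) (snd p)" using p by (auto simp: Gset_def gpt_def)
      have "\<bar>f p\<bar> \<le> C (fst p)" using C[OF pi(1), of "snd p"] pi False by simp
      also have "\<dots> \<le> D" using Ci[OF pi(1)] by (simp add: D_def)
      finally show ?thesis .
    qed
  qed
  then show ?thesis by blast
qed



definition Br :: "nat \<Rightarrow> (nat \<times> real) set" where
  "Br i = {p. fst p = i \<and> snd p > 0}"

definition mb :: "(nat \<times> real) measure \<Rightarrow> nat \<Rightarrow> real measure" where
  "mb \<mu> i = distr (density \<mu> (\<lambda>p. ennreal (indicator (Br i) p))) borel snd"

definition rd :: "(nat \<times> real) measure \<Rightarrow> real measure" where
  "rd \<mu> = distr \<mu> borel snd"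

lemma Br_sets: "Br i \<in> sets borel"
  unfolding Br_def by (rule br)

lemma space_Gm: "space (Gm N) = Gset N"
  by (simp add: Gm_def space_restrict_space)

context
  fixes \<mu> :: "(nat \<times> real) measure" and N :: nat
  assumes s\<mu>: "sets \<mu> = sets (Gm N)" and f\<mu>: "finite_measure \<mu>"
begin

lemma space_mu: "space \<mu> = Gset N"
  using sets_eq_imp_space_eq[OF s\<mu>] space_Gm by simp

lemma meas_mu: "g \<in> borel_measurable borel \<Longrightarrow> g \<in> borel_measurable \<mu>"
  unfolding measurable_cong_sets[OF s\<mu> refl] Gm_def by (rule measurable_restrict_space1)

lemma meas_mu': "g \<in> measurable borel M \<Longrightarrow> g \<in> measurable \<mu> M"
  unfolding measurable_cong_sets[OF s\<mu> refl] Gm_def by (rule measurable_restrict_space1)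

lemma snd_mu[measurable]: "snd \<in> measurable \<mu> borel"
  by (rule meas_mu'[OF snd_meas])

lemma ind_Br_mu[measurable]: "(\<lambda>p. indicator (Br i) p :: real) \<in> borel_measurable \<mu>"
  by (rule meas_mu) (rule borel_measurable_indicator[OF Br_sets])

lemma mb_sets[simp]: "sets (mb \<mu> i) = sets borel"
  by (simp add: mb_def)

lemma rd_sets[simp]: "sets (rd \<mu>) = sets borel"
  by (simp add: rd_def)

lemma mb_nn: "h \<in> borel_measurable borel \<Longrightarrow> (\<integral>\<^sup>+z. h z \<partial>mb \<mu> i) = (\<integral>\<^sup>+p. ennreal (indicator (Br i) p) * h (snd p) \<partial>\<mu>)"
  unfolding mb_def
  by (subst nn_integral_distr) (auto simp: nn_integral_density)

lemma rd_nn: "h \<in> borel_measurable borel \<Longrightarrow> (\<integral>\<^sup>+z. h z \<partial>rd \<mu>) = (\<integral>\<^sup>+p. h (snd p) \<partial>\<mu>)"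
  unfolding rd_def by (subst nn_integral_distr) auto

lemma mb_int:
  fixes h :: "real \<Rightarrow> real"
  assumes h[measurable]: "h \<in> borel_measurable borel"
  shows "(\<integral>z. h z \<partial>mb \<mu> i) = (\<integral>p. indicator (Br i) p * h (snd p) \<partial>\<mu>)"
proof -
  have sm: "snd \<in> measurable (density \<mu> (\<lambda>p. ennreal (indicator (Br i) p))) borel" by simp
  show ?thesis unfolding mb_def
    by (simp add: integral_distr[OF sm h] integral_density)
qed

lemma rd_int:
  fixes h :: "real \<Rightarrow> real"
  assumes h[measurable]: "h \<in> borel_measurable borel"
  shows "(\<integral>z. h z \<partial>rd \<mu>) = (\<integral>p. h (snd p) \<partial>\<mu>)"
  unfolding rd_def by (simp add: integral_distr[OF snd_mu h])

lemma mb_fin: "finite_measure (mb \<mu> i)"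
proof (rule finite_measureI)
  have "emeasure (mb \<mu> i) (space (mb \<mu> i)) = (\<integral>\<^sup>+z. indicator UNIV z \<partial>mb \<mu> i)"
    by (simp add: mb_def)
  also have "\<dots> = (\<integral>\<^sup>+p. ennreal (indicator (Br i) p) * indicator UNIV (snd p) \<partial>\<mu>)" by (rule mb_nn) simp
  also have "\<dots> \<le> (\<integral>\<^sup>+p. 1 \<partial>\<mu>)" by (intro nn_integral_mono) (auto split: split_indicator)
  also have "\<dots> < \<infinity>" using finite_measure.emeasure_finite[OF f\<mu>, of "space \<mu>"] by (simp add: top.not_eq_extremum)
  finally show "emeasure (mb \<mu> i) (space (mb \<mu> i)) \<noteq> \<infinity>" by simp
qed

lemma rd_fin: "finite_measure (rd \<mu>)"
  unfolding rd_def by (rule finite_measure.finite_measure_distr[OF f\<mu> snd_mu])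

end



context
  fixes \<mu> :: "(nat \<times> real) measure" and N :: nat
  assumes s\<mu>: "sets \<mu> = sets (Gm N)" and f\<mu>: "finite_measure \<mu>"
begin

lemma mb_emeasure: "S \<in> sets borel \<Longrightarrow> emeasure (mb \<mu> i) S = (\<integral>\<^sup>+p. ennreal (indicator (Br i) p) * indicator S (snd p) \<partial>\<mu>)"
proof -
  assume S: "S \<in> sets borel"
  have "emeasure (mb \<mu> i) S = (\<integral>\<^sup>+z. indicator S z \<partial>mb \<mu> i)"
    using S by (simp add: s\<mu> f\<mu>)
  also have "\<dots> = (\<integral>\<^sup>+p. ennreal (indicator (Br i) p) * indicator S (snd p) \<partial>\<mu>)"
    by (rule mb_nn[OF s\<mu> f\<mu>]) (use S in simp)
  finally show ?thesis .
qed

lemma rd_emeasure: "S \<in> sets borel \<Longrightarrow> emeasure (rd \<mu>) S = (\<integral>\<^sup>+p. indicator S (snd p) \<partial>\<mu>)"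
proof -
  assume S: "S \<in> sets borel"
  have "emeasure (rd \<mu>) S = (\<integral>\<^sup>+z. indicator S z \<partial>rd \<mu>)"
    using S by (simp add: s\<mu> f\<mu>)
  also have "\<dots> = (\<integral>\<^sup>+p. indicator S (snd p) \<partial>\<mu>)"
    by (rule rd_nn[OF s\<mu> f\<mu>]) (use S in simp)
  finally show ?thesis .
qed

lemma mb_supp: "emeasure (mb \<mu> i) {..0} = 0"
proof -
  have "emeasure (mb \<mu> i) {..0} = (\<integral>\<^sup>+p. ennreal (indicator (Br i) p) * indicator {..0} (snd p) \<partial>\<mu>)"
    by (rule mb_emeasure) simp
  also have "\<dots> = (\<integral>\<^sup>+p. 0 \<partial>\<mu>)"
    by (intro nn_integral_cong) (auto simp: Br_def split: split_indicator)
  finally show ?thesis by simp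
qed

lemma rd_supp: "emeasure (rd \<mu>) {..<0} = 0"
proof -
  have "emeasure (rd \<mu>) {..<0} = (\<integral>\<^sup>+p. indicator {..<0} (snd p) \<partial>\<mu>)"
    by (rule rd_emeasure) simp
  also have "\<dots> = (\<integral>\<^sup>+p. 0 \<partial>\<mu>)"
    by (intro nn_integral_cong) (auto simp: space_mu[OF s\<mu> f\<mu>] Gset_def split: split_indicator)
  finally show ?thesis by simp
qed

lemma rd_sum:
  assumes S: "S \<in> sets borel" "S \<subseteq> {0<..}"
  shows "emeasure (rd \<mu>) S = (\<Sum>i\<in>{1..N}. emeasure (mb \<mu> i) S)"
proof -
  have "emeasure (rd \<mu>) S = (\<integral>\<^sup>+p. indicator S (snd p) \<partial>\<mu>)" by (rule rd_emeasure[OF S(1)])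
  also have "\<dots> = (\<integral>\<^sup>+p. (\<Sum>i\<in>{1..N}. ennreal (indicator (Br i) p) * indicator S (snd p)) \<partial>\<mu>)"
  proof (intro nn_integral_cong)
    fix p assume p: "p \<in> space \<mu>"
    then have pG: "p \<in> Gset N" using space_mu[OF s\<mu> f\<mu>] by simp
    show "indicator S (snd p) = (\<Sum>i\<in>{1..N}. ennreal (indicator (Br i) p) * indicator S (snd p))"
    proof (cases "snd p \<in> S")
      case True
      then have "snd p > 0" using S by auto
      then have fi: "fst p \<in> {1..N}" and br: "p \<in> Br (fst p)" using pG by (auto simp: Gset_def Br_def)
      have "(\<Sum>i\<in>{1..N}. ennreal (indicator (Br i) p) * indicator S (snd p)) = (\<Sum>i\<in>{1..N}. if i = fst p then 1 else 0)"
        using True br by (intro sum.cong) (auto simp: Br_def)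
      also have "\<dots> = 1" using fi by simp
      finally show ?thesis using True by simp
    qed simp
  qed
  also have "\<dots> = (\<Sum>i\<in>{1..N}. (\<integral>\<^sup>+p. ennreal (indicator (Br i) p) * indicator S (snd p) \<partial>\<mu>))"
  proof (rule nn_integral_sum)
    fix i
    have [measurable]: "Br i \<in> sets borel" by (rule Br_sets)
    have [measurable]: "S \<in> sets borel" by (rule S(1))
    have [measurable]: "snd \<in> measurable \<mu> borel" by (rule snd_mu[OF s\<mu> f\<mu>])
    have [measurable]: "(\<lambda>p. indicator (Br i) p :: real) \<in> borel_measurable \<mu>" by (rule ind_Br_mu[OF s\<mu> f\<mu>])
    show "(\<lambda>p. ennreal (indicator (Br i) p) * indicator S (snd p)) \<in> borel_measurable \<mu>" by measurable
  qed
  also have "\<dots> = (\<Sum>i\<in>{1..N}. emeasure (mb \<mu> i) S)"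
    by (simp add: mb_emeasure[OF S(1)])
  finally show ?thesis .
qed

lemma mu_decomp:
  assumes f: "f \<in> C0 N"
  shows "(\<integral>p. f p \<partial>\<mu>) = (\<Sum>i=1..N. \<integral>z. indicator {0<..} z * f (i, z) \<partial>mb \<mu> i)
            + f (0,0) * measure (rd \<mu>) {0}"
proof -
  obtain C where C: "\<forall>p\<in>Gset N. \<bar>f p\<bar> \<le> C" using C0_bounded[OF f] by blast
  define phi where "phi i z = indicator {0<..} z * f (i, z)" for i z
  have phim[measurable]: "phi i \<in> borel_measurable borel" if "i \<in> {1..N}" for i
    unfolding phi_def using C0_branch_meas[OF f that] by simp
  have phib: "\<bar>phi i z\<bar> \<le> C" if "i \<in> {1..N}" for i z
    using C that by (auto simp: phi_def Gset_def split: split_indicator)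
  have sp: "space \<mu> = Gset N" by (rule space_mu[OF s\<mu> f\<mu>])
  interpret finite_measure \<mu> by (rule f\<mu>)
  have im: "integrable \<mu> (\<lambda>p. indicator (Br i) p * phi i (snd p))" if i: "i \<in> {1..N}" for i
  proof (rule integrable_const_bound[where B=C])
    show "AE p in \<mu>. norm (indicator (Br i) p * phi i (snd p)) \<le> C"
      using phib[OF i] C sp by (intro AE_I2) (auto split: split_indicator)
    show "(\<lambda>p. indicator (Br i) p * phi i (snd p)) \<in> borel_measurable \<mu>"
      using phim[OF i] by (intro borel_measurable_times ind_Br_mu[OF s\<mu> f\<mu>] measurable_compose[OF snd_mu[OF s\<mu> f\<mu>]]) auto
  qed
  have i0: "integrable \<mu> (\<lambda>p. indicator {0} (snd p) :: real)"
  proof (rule integrable_const_bound[where B=1])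
    show "(\<lambda>p. indicator {0} (snd p) :: real) \<in> borel_measurable \<mu>"
      by (intro measurable_compose[OF snd_mu[OF s\<mu> f\<mu>]]) simp
  qed (auto split: split_indicator)
  have "(\<integral>p. f p \<partial>\<mu>) = (\<integral>p. (\<Sum>i=1..N. indicator (Br i) p * phi i (snd p)) + f (0,0) * indicator {0} (snd p) \<partial>\<mu>)"
  proof (intro Bochner_Integration.integral_cong refl)
    fix p assume "p \<in> space \<mu>"
    then have pG: "p \<in> Gset N" using sp by simp
    show "f p = (\<Sum>i=1..N. indicator (Br i) p * phi i (snd p)) + f (0,0) * indicator {0} (snd p)"
    proof (cases "snd p = 0")
      case True
      then have "p = (0,0)" using pG by (auto simp: Gset_def)
      moreover have "(\<Sum>i=1..N. indicator (Br i) (0::nat,0::real) * phi i 0) = (0::real)"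
        by (intro sum.neutral) (auto simp: Br_def)
      ultimately show ?thesis by simp
    next
      case False
      then have fi: "fst p \<in> {1..N}" and pos: "snd p > 0" and br: "p \<in> Br (fst p)" using pG by (auto simp: Gset_def Br_def)
      have "(\<Sum>i=1..N. indicator (Br i) p * phi i (snd p)) = (\<Sum>i=1..N. if i = fst p then f p else 0)"
        using br pos by (intro sum.cong) (auto simp: Br_def phi_def)
      also have "\<dots> = f p" using fi by simp
      finally show ?thesis using False by simp
    qed
  qed
  also have "\<dots> = (\<Sum>i=1..N. \<integral>p. indicator (Br i) p * phi i (snd p) \<partial>\<mu>) + f (0,0) * (\<integral>p. indicator {0} (snd p) \<partial>\<mu>)"
  proof -
    have iS: "integrable \<mu> (\<lambda>p. \<Sum>i=1..N. indicator (Br i) p * phi i (snd p))"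
      by (rule Bochner_Integration.integrable_sum) (use im in auto)
    have i0': "integrable \<mu> (\<lambda>p. f (0,0) * indicator {0} (snd p))" using i0 by simp
    have "(\<integral>p. (\<Sum>i=1..N. indicator (Br i) p * phi i (snd p)) + f (0,0) * indicator {0} (snd p) \<partial>\<mu>)
       = (\<integral>p. (\<Sum>i=1..N. indicator (Br i) p * phi i (snd p)) \<partial>\<mu>) + (\<integral>p. f (0,0) * indicator {0} (snd p) \<partial>\<mu>)"
      by (rule Bochner_Integration.integral_add[OF iS i0'])
    also have "(\<integral>p. (\<Sum>i=1..N. indicator (Br i) p * phi i (snd p)) \<partial>\<mu>) = (\<Sum>i=1..N. \<integral>p. indicator (Br i) p * phi i (snd p) \<partial>\<mu>)"
      by (rule Bochner_Integration.integral_sum) (use im in auto)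
    also have "(\<integral>p. f (0,0) * indicator {0} (snd p) \<partial>\<mu>) = f (0,0) * (\<integral>p. indicator {0} (snd p) \<partial>\<mu>)"
      by (rule integral_mult_right_zero)
    finally show ?thesis .
  qed
  also have "(\<Sum>i=1..N. \<integral>p. indicator (Br i) p * phi i (snd p) \<partial>\<mu>) = (\<Sum>i=1..N. \<integral>z. phi i z \<partial>mb \<mu> i)"
    by (intro sum.cong refl) (simp add: mb_int[OF s\<mu> f\<mu> phim])
  also have "(\<integral>p. indicator {0} (snd p) \<partial>\<mu>) = (\<integral>z. (indicator {0} z :: real) \<partial>rd \<mu>)"
    by (rule rd_int[OF s\<mu> f\<mu>, symmetric]) simp
  also have "\<dots> = measure (rd \<mu>) {0}"
    using finite_measure.emeasure_finite[OF rd_fin[OF s\<mu> f\<mu>]] by (simp add: rd_def)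
  finally show ?thesis unfolding phi_def .
qed

end



lemma integral_cmul_real: "integral S (\<lambda>x. (c::real) * f x) = c * integral S f"
  using integral_cmul[where c=c and f=f and S=S] by simp

lemma K_facts:
  assumes fel: "feller N K" and t: "t \<ge> 0" and x: "x \<in> Gset N"
  shows "sets (K t x) = sets (Gm N)" "finite_measure (K t x)"
proof -
  have "K t \<in> measurable (Gm N) (subprob_algebra (Gm N))" using fel t by (simp add: feller_def)
  moreover have "x \<in> space (Gm N)" using x by (simp add: space_Gm)
  ultimately have "K t x \<in> space (subprob_algebra (Gm N))" by (rule measurable_space)
  then have "subprob_space (K t x)" "sets (K t x) = sets (Gm N)" by (auto simp: space_subprob_algebra)
  then show "sets (K t x) = sets (Gm N)" "finite_measure (K t x)" by (auto simp: subprob_space_def)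
qed

lemma test_fun:
  assumes eq: "\<forall>f\<in>Dal N \<alpha>. \<forall>x\<in>Gset N. \<forall>t\<ge>0.
               integrable (K t x) f \<and>
               (\<lambda>u. Qop K u (fpp N f) x) integrable_on {0..t} \<and>
               Qop K t f x = f x + (1/2) * integral {0..t} (\<lambda>u. Qop K u (fpp N f) x)"
    and g: "g \<in> Dal N \<alpha>" and gpp: "fpp N g = (\<lambda>p. - (w^2) * g p)"
    and x: "x \<in> Gset N" and t: "t \<ge> 0"
  shows "Qop K t g x = exp (- (w^2) / 2 * t) * g x"
proof -
  let ?G = "\<lambda>u. Qop K u g x"
  have Q: "Qop K u (fpp N g) x = - (w^2) * ?G u" for u
    unfolding gpp Qop_def by simp
  have E: "?G u = g x + (- (w^2) / 2) * integral {0..u} ?G" and I: "(\<lambda>s. - (w^2) * ?G s) integrable_on {0..u}" if "u \<ge> 0" for u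
  proof -
    have e: "?G u = g x + (1/2) * integral {0..u} (\<lambda>s. Qop K s (fpp N g) x)"
      and i: "(\<lambda>s. Qop K s (fpp N g) x) integrable_on {0..u}"
      using eq g x that by blast+
    show "(\<lambda>s. - (w^2) * ?G s) integrable_on {0..u}" using i unfolding Q .
    show "?G u = g x + (- (w^2) / 2) * integral {0..u} ?G"
      using e unfolding Q integral_cmul_real by simp
  qed
  show ?thesis
  proof (cases "w = 0")
    case True
    then show ?thesis using E[OF t] by simp
  next
    case False
    have "?G integrable_on {0..t}" using I[OF t] integrable_on_cmult_iff[of "-(w^2)" ?G "{0..t}"] False by simp
    then have "?G t = g x * exp (- (w^2) / 2 * t)"
      by (rule ode_exp[OF t]) (use E in auto)
    then show ?thesis by simp
  qed
qed



lemma dm_fin: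
  assumes i: "integrable lborel phi" and nn: "\<And>z. phi z \<ge> 0"
  shows "finite_measure (density lborel (\<lambda>z. ennreal (phi z)))"
proof (rule finite_measureI)
  have m[measurable]: "phi \<in> borel_measurable borel" using i by auto
  have "emeasure (density lborel (\<lambda>z. ennreal (phi z))) (space (density lborel (\<lambda>z. ennreal (phi z))))
      = (\<integral>\<^sup>+z. ennreal (phi z) \<partial>lborel)"
    by (simp add: emeasure_density)
  also have "\<dots> = ennreal (\<integral>z. phi z \<partial>lborel)"
    by (rule nn_integral_eq_integral[OF i]) (simp add: nn)
  finally show "emeasure (density lborel (\<lambda>z. ennreal (phi z))) (space (density lborel (\<lambda>z. ennreal (phi z)))) \<noteq> \<infinity>"
    by simp
qed

lemma dm_int:
  fixes h :: "real \<Rightarrow> real"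
  assumes m[measurable]: "phi \<in> borel_measurable borel" and nn: "\<And>z. phi z \<ge> 0" and h[measurable]: "h \<in> borel_measurable borel"
  shows "(\<integral>z. h z \<partial>density lborel (\<lambda>z. ennreal (phi z))) = (\<integral>z. phi z * h z \<partial>lborel)"
  by (subst integral_density) (auto simp: nn)

lemma dm_supp:
  fixes phi :: "real \<Rightarrow> real"
  assumes m[measurable]: "phi \<in> borel_measurable borel" and z: "\<And>z. z \<le> 0 \<Longrightarrow> phi z = 0"
  shows "emeasure (density lborel (\<lambda>z. ennreal (phi z))) {..0} = 0"
proof -
  have "emeasure (density lborel (\<lambda>z. ennreal (phi z))) {..0} = (\<integral>\<^sup>+z. ennreal (phi z) * indicator {..0} z \<partial>lborel)"
    by (rule emeasure_density) (auto intro: borel_closed)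
  also have "\<dots> = (\<integral>\<^sup>+z. 0 \<partial>(lborel::real measure))"
    by (intro nn_integral_cong) (auto simp: z split: split_indicator)
  finally show ?thesis by simp
qed

definition wb :: "(nat \<Rightarrow> real) \<Rightarrow> real \<Rightarrow> nat \<times> real \<Rightarrow> nat \<Rightarrow> real measure" where
  "wb \<alpha> t x k = density lborel (\<lambda>z. ennreal (indicator {0<..} z * dens \<alpha> t x k z))"

definition wr :: "nat \<Rightarrow> (nat \<Rightarrow> real) \<Rightarrow> real \<Rightarrow> nat \<times> real \<Rightarrow> real measure" where
  "wr N \<alpha> t x = density lborel (\<lambda>z. ennreal (indicator {0<..} z * (\<Sum>k\<in>{1..N}. dens \<alpha> t x k z)))"

context
  fixes N :: nat and \<alpha> :: "nat \<Rightarrow> real" and t :: real and x :: "nat \<times> real"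
  assumes apos: "\<forall>i\<in>{1..N}. \<alpha> i > 0" and t: "t > 0" and x: "x \<in> Gset N"
begin

lemma hx: "snd x \<ge> 0" using x by (auto simp: Gset_def)

lemma dens_integrable: "integrable lborel (\<lambda>z. indicator {0<..} z * dens \<alpha> t x k z)"
proof -
  have a: "integrable lborel (\<lambda>z. indicator {0<..} z * gauss t (snd x + z) * 1)"
    by (rule int_half_p[OF t, where C=1]) auto
  have b: "integrable lborel (\<lambda>z. indicator {0<..} z * gauss t (snd x - z) * 1)"
    by (rule int_half_m[OF t, where C=1]) auto
  have "integrable lborel (\<lambda>z. (2 * \<alpha> k) * (indicator {0<..} z * gauss t (snd x + z) * 1)
     + (if k = fst x then 1 else 0) * (indicator {0<..} z * gauss t (snd x - z) * 1 - indicator {0<..} z * gauss t (snd x + z) * 1))"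
    using a b by (intro Bochner_Integration.integrable_add Bochner_Integration.integrable_mult_right Bochner_Integration.integrable_diff)
  then show ?thesis
    by (rule Bochner_Integration.integrable_cong[THEN iffD1, rotated 2]) (auto simp: dens_def algebra_simps)
qed

lemma dens_ind_nonneg: "k \<in> {1..N} \<Longrightarrow> indicator {0<..} z * dens \<alpha> t x k z \<ge> 0"
proof -
  assume k: "k \<in> {1..N}"
  then have "\<alpha> k > 0" using apos by blast
  then have "\<alpha> k \<ge> 0" by simp
  then show ?thesis using dens_nonneg[OF t, of \<alpha> k x z] hx by (auto split: split_indicator)
qed

lemma wb_fin: "k \<in> {1..N} \<Longrightarrow> finite_measure (wb \<alpha> t x k)"
  unfolding wb_def by (rule dm_fin[OF dens_integrable dens_ind_nonneg])

lemma wb_sets[simp]: "sets (wb \<alpha> t x k) = sets borel"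
  by (simp add: wb_def)

lemma wr_sets[simp]: "sets (wr N \<alpha> t x) = sets borel"
  by (simp add: wr_def)

lemma wb_int: "k \<in> {1..N} \<Longrightarrow> h \<in> borel_measurable borel \<Longrightarrow>
    (\<integral>z. h z \<partial>wb \<alpha> t x k) = (\<integral>z. indicator {0<..} z * dens \<alpha> t x k z * h z \<partial>lborel)"
  unfolding wb_def by (rule dm_int) (auto intro: dens_ind_nonneg)

lemma wb_supp: "emeasure (wb \<alpha> t x k) {..0} = 0"
  unfolding wb_def by (rule dm_supp) auto

lemma wr_eq: "(\<lambda>z. indicator {0<..} z * (\<Sum>k\<in>{1..N}. dens \<alpha> t x k z)) = (\<lambda>z. \<Sum>k\<in>{1..N}. indicator {0<..} z * dens \<alpha> t x k z)"
  by (simp add: sum_distrib_left)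

lemma wr_integrable: "integrable lborel (\<lambda>z. indicator {0<..} z * (\<Sum>k\<in>{1..N}. dens \<alpha> t x k z))"
  unfolding wr_eq by (intro Bochner_Integration.integrable_sum dens_integrable)

lemma wr_nonneg: "indicator {0<..} z * (\<Sum>k\<in>{1..N}. dens \<alpha> t x k z) \<ge> 0"
  unfolding sum_distrib_left by (intro sum_nonneg dens_ind_nonneg)

lemma wr_fin: "finite_measure (wr N \<alpha> t x)"
  unfolding wr_def by (rule dm_fin[OF wr_integrable wr_nonneg])

lemma wr_int: "h \<in> borel_measurable borel \<Longrightarrow>
    (\<integral>z. h z \<partial>wr N \<alpha> t x) = (\<integral>z. indicator {0<..} z * (\<Sum>k\<in>{1..N}. dens \<alpha> t x k z) * h z \<partial>lborel)"
  unfolding wr_def apply (rule dm_int) apply simp apply (rule wr_nonneg) apply assumption done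

lemma wr_supp: "emeasure (wr N \<alpha> t x) {..<0} = 0"
proof -
  have "emeasure (wr N \<alpha> t x) {..<0} \<le> emeasure (wr N \<alpha> t x) {..0}"
    by (rule emeasure_mono) auto
  also have "\<dots> = 0" unfolding wr_def by (rule dm_supp) auto
  finally show ?thesis by simp
qed

lemma wr_emeasure: "S \<in> sets borel \<Longrightarrow> emeasure (wr N \<alpha> t x) S = (\<Sum>k\<in>{1..N}. emeasure (wb \<alpha> t x k) S)"
proof -
  assume S[measurable]: "S \<in> sets borel"
  have "emeasure (wr N \<alpha> t x) S = (\<integral>\<^sup>+z. ennreal (indicator {0<..} z * (\<Sum>k\<in>{1..N}. dens \<alpha> t x k z)) * indicator S z \<partial>lborel)"
    unfolding wr_def by (rule emeasure_density) measurable
  also have "\<dots> = (\<integral>\<^sup>+z. (\<Sum>k\<in>{1..N}. ennreal (indicator {0<..} z * dens \<alpha> t x k z) * indicator S z) \<partial>lborel)"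
  proof (intro nn_integral_cong)
    fix z
    have e: "(\<Sum>k\<in>{1..N}. ennreal (indicator {0<..} z * dens \<alpha> t x k z)) = ennreal (\<Sum>k\<in>{1..N}. indicator {0<..} z * dens \<alpha> t x k z)"
      by (rule sum_ennreal) (rule dens_ind_nonneg)
    show "ennreal (indicator {0<..} z * (\<Sum>k\<in>{1..N}. dens \<alpha> t x k z)) * indicator S z =
         (\<Sum>k\<in>{1..N}. ennreal (indicator {0<..} z * dens \<alpha> t x k z) * indicator S z)"
      by (simp only: sum_distrib_left e[symmetric] sum_distrib_right)
  qed
  also have "\<dots> = (\<Sum>k\<in>{1..N}. (\<integral>\<^sup>+z. ennreal (indicator {0<..} z * dens \<alpha> t x k z) * indicator S z \<partial>lborel))"
    by (rule nn_integral_sum) measurable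
  also have "\<dots> = (\<Sum>k\<in>{1..N}. emeasure (wb \<alpha> t x k) S)"
    unfolding wb_def by (intro sum.cong refl emeasure_density[symmetric]) measurable
  finally show ?thesis .
qed

lemma wr_zero: "emeasure (wr N \<alpha> t x) {0} = 0"
proof -
  have "emeasure (wr N \<alpha> t x) {0} = (\<integral>\<^sup>+z. ennreal (indicator {0<..} z * (\<Sum>k\<in>{1..N}. dens \<alpha> t x k z)) * indicator {0} z \<partial>lborel)"
    unfolding wr_def by (rule emeasure_density) measurable
  also have "\<dots> = (\<integral>\<^sup>+z. 0 \<partial>(lborel::real measure))"
    by (rule nn_integral_cong) (auto split: split_indicator)
  finally show ?thesis by simp
qed

end



lemma integrable_bdd_mult:
  fixes g h :: "real \<Rightarrow> real"
  assumes g: "integrable lborel g" and h[measurable]: "h \<in> borel_measurable borel" and b: "\<And>z. \<bar>h z\<bar> \<le> 1"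
  shows "integrable lborel (\<lambda>z. g z * h z)"
proof (rule Bochner_Integration.integrable_bound[OF g])
  show "(\<lambda>z. g z * h z) \<in> borel_measurable lborel" using g by auto
  show "AE z in lborel. norm (g z * h z) \<le> norm (g z)"
    using b by (intro AE_I2) (simp add: abs_mult mult_left_le)
qed

definition sc :: "real \<Rightarrow> real measure \<Rightarrow> real measure" where
  "sc c M = density M (\<lambda>_. ennreal c)"

lemma sc_facts:
  fixes M :: "real measure" and h :: "real \<Rightarrow> real"
  assumes f: "finite_measure M" and s: "sets M = sets borel" and c: "c \<ge> 0"
  shows "finite_measure (sc c M)" "sets (sc c M) = sets borel"
    "S \<in> sets borel \<Longrightarrow> emeasure (sc c M) S = ennreal c * emeasure M S"
    "h \<in> borel_measurable borel \<Longrightarrow> (\<integral>z. h z \<partial>sc c M) = c * (\<integral>z. h z \<partial>M)"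
proof -
  interpret finite_measure M by fact
  show "sets (sc c M) = sets borel" using s by (simp add: sc_def)
  show "finite_measure (sc c M)"
  proof (rule finite_measureI)
    have "emeasure (sc c M) (space (sc c M)) = ennreal c * emeasure M (space M)"
      unfolding sc_def by (simp add: emeasure_density_const)
    then show "emeasure (sc c M) (space (sc c M)) \<noteq> \<infinity>"
      using emeasure_finite[of "space M"] by (simp add: ennreal_mult_eq_top_iff)
  qed
  show "S \<in> sets borel \<Longrightarrow> emeasure (sc c M) S = ennreal c * emeasure M S"
    unfolding sc_def using s by (simp add: emeasure_density_const)
  assume h: "h \<in> borel_measurable borel"
  have hm: "h \<in> borel_measurable M" unfolding measurable_cong_sets[OF s refl] by (rule h)
  show "(\<integral>z. h z \<partial>sc c M) = c * (\<integral>z. h z \<partial>M)"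
    unfolding sc_def using c hm by (subst integral_density) auto
qed

context
  fixes N :: nat and \<alpha> :: "nat \<Rightarrow> real" and K :: "real \<Rightarrow> nat \<times> real \<Rightarrow> (nat \<times> real) measure"
    and t :: real and x :: "nat \<times> real"
  assumes apos: "\<forall>i\<in>{1..N}. \<alpha> i > 0"
    and asum: "(\<Sum>i=1..N. \<alpha> i) = 1"
    and fel: "feller N K"
    and eq: "\<forall>f\<in>Dal N \<alpha>. \<forall>x\<in>Gset N. \<forall>t\<ge>0.
               integrable (K t x) f \<and>
               (\<lambda>u. Qop K u (fpp N f) x) integrable_on {0..t} \<and>
               Qop K t f x = f x + (1/2) * integral {0..t} (\<lambda>u. Qop K u (fpp N f) x)"
    and t: "t > 0" and x: "x \<in> Gset N"
begin

lemma sK: "sets (K t x) = sets (Gm N)" using K_facts[OF fel _ x] t by simp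
lemma fK: "finite_measure (K t x)" using K_facts[OF fel _ x] t by simp

lemma exp_eq: "exp (- (w^2) / 2 * t) = exp (- (w^2 * t) / 2)" by (simp add: field_simps)

lemma cos_rd: "(\<integral>z. cos (w * z) \<partial>rd (K t x)) = exp (- (w^2 * t) / 2) * cos (w * snd x)"
proof -
  have "(\<integral>z. cos (w * z) \<partial>rd (K t x)) = (\<integral>p. cos (w * snd p) \<partial>K t x)"
    by (rule rd_int[OF sK fK]) simp
  also have "\<dots> = Qop K t (fc w) x" by (simp add: Qop_def fc_def)
  also have "\<dots> = exp (- (w^2) / 2 * t) * fc w x"
    by (rule test_fun[OF eq fc_Dal fpp_fc x]) (use t in simp)
  finally show ?thesis by (simp add: exp_eq fc_def)
qed

lemma cos_wr: "(\<integral>z. cos (w * z) \<partial>wr N \<alpha> t x) = exp (- (w^2 * t) / 2) * cos (w * snd x)"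
proof -
  define A where "A = (\<integral>z. indicator {0<..} z * gauss t (snd x + z) * cos (w * z) \<partial>lborel)"
  define Bv where "Bv = (\<integral>z. indicator {0<..} z * gauss t (snd x - z) * cos (w * z) \<partial>lborel)"
  have ik: "integrable lborel (\<lambda>z. indicator {0<..} z * dens \<alpha> t x k z * cos (w * z))" for k
    by (rule integrable_bdd_mult[OF dens_integrable[OF apos t x]]) auto
  have "(\<integral>z. cos (w * z) \<partial>wr N \<alpha> t x) = (\<integral>z. indicator {0<..} z * (\<Sum>k\<in>{1..N}. dens \<alpha> t x k z) * cos (w * z) \<partial>lborel)"
    by (rule wr_int[OF apos t x]) simp
  also have "\<dots> = (\<integral>z. (\<Sum>k\<in>{1..N}. indicator {0<..} z * dens \<alpha> t x k z * cos (w * z)) \<partial>lborel)"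
    by (intro Bochner_Integration.integral_cong refl) (simp only: sum_distrib_left sum_distrib_right)
  also have "\<dots> = (\<Sum>k\<in>{1..N}. \<integral>z. indicator {0<..} z * dens \<alpha> t x k z * cos (w * z) \<partial>lborel)"
    by (rule Bochner_Integration.integral_sum) (rule ik)
  also have "\<dots> = (\<Sum>k\<in>{1..N}. 2 * \<alpha> k * A + (if k = fst x then Bv - A else 0))"
    unfolding A_def Bv_def by (intro sum.cong refl dens_int[OF t, where C=1]) auto
  also have "\<dots> = 2 * A + (\<Sum>k\<in>{1..N}. if k = fst x then Bv - A else 0)"
  proof -
    have "(\<Sum>k\<in>{1..N}. 2 * \<alpha> k * A) = 2 * A * (\<Sum>k\<in>{1..N}. \<alpha> k)"
      by (simp add: sum_distrib_left mult_ac)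
    then show ?thesis using asum by (simp add: sum.distrib)
  qed
  also have "\<dots> = A + Bv"
  proof (cases "fst x \<in> {1..N}")
    case True then show ?thesis by simp
  next
    case False
    then have "snd x = 0" using x by (auto simp: Gset_def)
    then have "A = Bv" unfolding A_def Bv_def using gauss_even[of t] by (simp add: algebra_simps)
    with False show ?thesis by simp
  qed
  also have "\<dots> = exp (- (w^2 * t) / 2) * cos (w * snd x)"
    unfolding A_def Bv_def using W_cos[OF t, of "snd x" w] by simp
  finally show ?thesis .
qed

lemma rd_wr: "rd (K t x) = wr N \<alpha> t x"
proof (rule CU)
  show "finite_measure (rd (K t x))" by (rule rd_fin[OF sK fK])
  show "finite_measure (wr N \<alpha> t x)" by (rule wr_fin[OF apos t x])
  show "sets (rd (K t x)) = sets borel" by (simp add: rd_def)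
  show "sets (wr N \<alpha> t x) = sets borel" by (simp add: wr_def)
  show "emeasure (rd (K t x)) {..<0} = 0" by (rule rd_supp[OF sK fK])
  show "emeasure (wr N \<alpha> t x) {..<0} = 0" by (rule wr_supp[OF apos t x])
  show "(\<integral>z. cos (w * z) \<partial>rd (K t x)) = (\<integral>z. cos (w * z) \<partial>wr N \<alpha> t x)" for w
    by (simp add: cos_rd cos_wr)
qed


lemma space_K: "space (K t x) = Gset N" by (rule space_mu[OF sK fK])

lemma ind_sin: "p \<in> Gset N \<Longrightarrow> indicator (Br k) p * sin (w * snd p) = (if fst p = k then sin (w * snd p) else 0)"
  by (auto simp: Br_def Gset_def split: split_indicator)

lemma int_Br_sin: "integrable (K t x) (\<lambda>p. indicator (Br k) p * sin (w * snd p))"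
proof -
  interpret finite_measure "K t x" by (rule fK)
  show ?thesis
  proof (rule integrable_const_bound[where B=1])
    show "(\<lambda>p. indicator (Br k) p * sin (w * snd p)) \<in> borel_measurable (K t x)"
      by (intro borel_measurable_times ind_Br_mu[OF sK fK] measurable_compose[OF snd_mu[OF sK fK]]) auto
  qed (auto split: split_indicator)
qed

lemma sin_K:
  assumes i: "i \<in> {1..N}" and j: "j \<in> {1..N}" and ij: "i \<noteq> j"
  shows "(1 / \<alpha> i) * (\<integral>z. sin (w * z) \<partial>mb (K t x) i) - (1 / \<alpha> j) * (\<integral>z. sin (w * z) \<partial>mb (K t x) j)
    = exp (- (w^2 * t) / 2) * (((if fst x = i then 1 / \<alpha> i else 0) - (if fst x = j then 1 / \<alpha> j else 0)) * sin (w * snd x))"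
proof -
  define B where "B k = (if k = i then 1 / \<alpha> i else 0) - (if k = j then 1 / \<alpha> j else 0)" for k
  have ai: "\<alpha> i > 0" and aj: "\<alpha> j > 0" using apos i j by auto
  have "(\<Sum>k=1..N. \<alpha> k * B k) = (\<Sum>k\<in>{1..N}. (if k = i then 1 else 0) - (if k = j then 1 else 0))"
    using ai aj by (intro sum.cong) (auto simp: B_def)
  also have "\<dots> = 0" using i j by (simp add: sum_subtractf)
  finally have SB: "(\<Sum>k=1..N. \<alpha> k * B k) = 0" .
  have "Qop K t (fs B w) x = exp (- (w^2) / 2 * t) * fs B w x"
    by (rule test_fun[OF eq fs_Dal[OF SB] fpp_fs x]) (use t in simp)
  moreover have "Qop K t (fs B w) x = (1 / \<alpha> i) * (\<integral>p. indicator (Br i) p * sin (w * snd p) \<partial>K t x)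
       - (1 / \<alpha> j) * (\<integral>p. indicator (Br j) p * sin (w * snd p) \<partial>K t x)"
  proof -
    have "Qop K t (fs B w) x = (\<integral>p. (1 / \<alpha> i) * (indicator (Br i) p * sin (w * snd p))
       - (1 / \<alpha> j) * (indicator (Br j) p * sin (w * snd p)) \<partial>K t x)"
      unfolding Qop_def
    proof (intro Bochner_Integration.integral_cong refl)
      fix p assume "p \<in> space (K t x)"
      then have p: "p \<in> Gset N" using space_K by simp
      show "fs B w p = (1 / \<alpha> i) * (indicator (Br i) p * sin (w * snd p)) - (1 / \<alpha> j) * (indicator (Br j) p * sin (w * snd p))"
        unfolding ind_sin[OF p] fs_def B_def using ij by auto
    qed
    also have "\<dots> = (1 / \<alpha> i) * (\<integral>p. indicator (Br i) p * sin (w * snd p) \<partial>K t x)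
       - (1 / \<alpha> j) * (\<integral>p. indicator (Br j) p * sin (w * snd p) \<partial>K t x)"
      using int_Br_sin[of i w] int_Br_sin[of j w] by simp
    finally show ?thesis .
  qed
  moreover have "(\<integral>z. sin (w * z) \<partial>mb (K t x) k) = (\<integral>p. indicator (Br k) p * sin (w * snd p) \<partial>K t x)" for k
    by (rule mb_int[OF sK fK]) simp
  ultimately show ?thesis by (simp add: exp_eq fs_def B_def)
qed

lemma sin_W:
  assumes i: "i \<in> {1..N}" and j: "j \<in> {1..N}" and ij: "i \<noteq> j"
  shows "(1 / \<alpha> i) * (\<integral>z. sin (w * z) \<partial>wb \<alpha> t x i) - (1 / \<alpha> j) * (\<integral>z. sin (w * z) \<partial>wb \<alpha> t x j)
    = exp (- (w^2 * t) / 2) * (((if fst x = i then 1 / \<alpha> i else 0) - (if fst x = j then 1 / \<alpha> j else 0)) * sin (w * snd x))"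
proof -
  define A where "A = (\<integral>z. indicator {0<..} z * gauss t (snd x + z) * sin (w * z) \<partial>lborel)"
  define Bv where "Bv = (\<integral>z. indicator {0<..} z * gauss t (snd x - z) * sin (w * z) \<partial>lborel)"
  have ai: "\<alpha> i > 0" and aj: "\<alpha> j > 0" using apos i j by auto
  have S: "(\<integral>z. sin (w * z) \<partial>wb \<alpha> t x k) = 2 * \<alpha> k * A + (if k = fst x then Bv - A else 0)" if k: "k \<in> {1..N}" for k
  proof -
    have "(\<integral>z. sin (w * z) \<partial>wb \<alpha> t x k) = (\<integral>z. indicator {0<..} z * dens \<alpha> t x k z * sin (w * z) \<partial>lborel)"
      by (rule wb_int[OF apos t x k]) simp
    also have "\<dots> = 2 * \<alpha> k * A + (if k = fst x then Bv - A else 0)"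
      unfolding A_def Bv_def by (rule dens_int[OF t, where C=1]) auto
    finally show ?thesis .
  qed
  have W: "Bv - A = exp (- (w^2 * t) / 2) * sin (w * snd x)"
    unfolding A_def Bv_def by (rule W_sin[OF t])
  show ?thesis unfolding S[OF i] S[OF j] W[symmetric]
    using ai aj ij W by (auto simp: field_simps)
qed


lemma ennreal_lin_eq:
  assumes "a \<ge> 0" "b \<ge> 0" "c \<ge> 0" "d \<ge> 0" "p \<ge> 0" "q \<ge> 0"
    and "ennreal p * ennreal a + ennreal q * ennreal b = ennreal p * ennreal c + ennreal q * ennreal d"
  shows "p * a + q * b = p * c + q * d"
proof -
  have e1: "ennreal (p * a + q * b) = ennreal p * ennreal a + ennreal q * ennreal b"
    using assms by (simp add: ennreal_mult ennreal_plus)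
  have e2: "ennreal (p * c + q * d) = ennreal p * ennreal c + ennreal q * ennreal d"
    using assms by (simp add: ennreal_mult ennreal_plus)
  have "ennreal (p * a + q * b) = ennreal (p * c + q * d)" unfolding e1 e2 by (rule assms(7))
  then show ?thesis using assms by (subst (asm) ennreal_inj) auto
qed

lemma branch_eq:
  assumes i: "i \<in> {1..N}" and j: "j \<in> {1..N}" and S: "S \<in> sets borel"
  shows "(1 / \<alpha> i) * measure (mb (K t x) i) S + (1 / \<alpha> j) * measure (wb \<alpha> t x j) S
       = (1 / \<alpha> i) * measure (wb \<alpha> t x i) S + (1 / \<alpha> j) * measure (mb (K t x) j) S"
proof (cases "i = j")
  case True then show ?thesis by simp
next
  case False
  have ai: "\<alpha> i > 0" and aj: "\<alpha> j > 0" using apos i j by auto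
  let ?ci = "1 / \<alpha> i" and ?cj = "1 / \<alpha> j"
  have ci: "?ci \<ge> 0" and cj: "?cj \<ge> 0" using ai aj by auto
  let ?mi = "mb (K t x) i" and ?mj = "mb (K t x) j" and ?wi = "wb \<alpha> t x i" and ?wj = "wb \<alpha> t x j"
  have fmi: "finite_measure ?mi" and fmj: "finite_measure ?mj" using mb_fin[OF sK fK] by auto
  have fwi: "finite_measure ?wi" and fwj: "finite_measure ?wj" using wb_fin[OF apos t x] i j by auto
  have smi: "sets ?mi = sets borel" and smj: "sets ?mj = sets borel" using mb_sets[OF sK fK] by auto
  have swi: "sets ?wi = sets borel" and swj: "sets ?wj = sets borel" using wb_sets[OF apos t x] by auto
  note A1 = sc_facts[OF fmi smi ci] and A2 = sc_facts[OF fwj swj cj]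
  note B1 = sc_facts[OF fwi swi ci] and B2 = sc_facts[OF fmj smj cj]
  define P where "P = addm (sc ?ci ?mi) (sc ?cj ?wj)"
  define Q where "Q = addm (sc ?ci ?wi) (sc ?cj ?mj)"
  have PQ: "P = Q"
  proof (rule SU)
    show "finite_measure P" unfolding P_def by (rule finite_addm[OF A1(2) A2(2) A1(1) A2(1)])
    show "finite_measure Q" unfolding Q_def by (rule finite_addm[OF B1(2) B2(2) B1(1) B2(1)])
    show "sets P = sets borel" unfolding P_def by (rule sets_addm[OF A1(2) A2(2)])
    show "sets Q = sets borel" unfolding Q_def by (rule sets_addm[OF B1(2) B2(2)])
    show "emeasure P {..0} = 0" unfolding P_def
      by (simp add: emeasure_addm[OF A1(2) A2(2)] A1(3) A2(3) mb_supp[OF sK fK] wb_supp[OF apos t x])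
    show "emeasure Q {..0} = 0" unfolding Q_def
      by (simp add: emeasure_addm[OF B1(2) B2(2)] B1(3) B2(3) mb_supp[OF sK fK] wb_supp[OF apos t x])
    fix w
    have "(\<integral>z. sin (w * z) \<partial>P) = ?ci * (\<integral>z. sin (w * z) \<partial>?mi) + ?cj * (\<integral>z. sin (w * z) \<partial>?wj)"
      unfolding P_def by (subst integral_addm[OF A1(2) A2(2) A1(1) A2(1), where C=1]) (auto simp: A1(4) A2(4))
    moreover have "(\<integral>z. sin (w * z) \<partial>Q) = ?ci * (\<integral>z. sin (w * z) \<partial>?wi) + ?cj * (\<integral>z. sin (w * z) \<partial>?mj)"
      unfolding Q_def by (subst integral_addm[OF B1(2) B2(2) B1(1) B2(1), where C=1]) (auto simp: B1(4) B2(4))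
    moreover note sin_K[OF i j False, of w] sin_W[OF i j False, of w]
    ultimately show "(\<integral>z. sin (w * z) \<partial>P) = (\<integral>z. sin (w * z) \<partial>Q)" by linarith
  qed
  have "emeasure P S = emeasure Q S" using PQ by simp
  then have "ennreal ?ci * emeasure ?mi S + ennreal ?cj * emeasure ?wj S = ennreal ?ci * emeasure ?wi S + ennreal ?cj * emeasure ?mj S"
    unfolding P_def Q_def using S
    by (simp add: emeasure_addm[OF A1(2) A2(2)] emeasure_addm[OF B1(2) B2(2)] A1(3) A2(3) B1(3) B2(3))
  then show ?thesis
    using ci cj
    by (intro ennreal_lin_eq) (simp_all add: finite_measure.emeasure_eq_measure[OF fmi] finite_measure.emeasure_eq_measure[OF fmj]
        finite_measure.emeasure_eq_measure[OF fwi] finite_measure.emeasure_eq_measure[OF fwj])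
qed


lemma split0:
  fixes M :: "real measure"
  assumes s: "sets M = sets borel" and z: "emeasure M {..0} = 0" and S: "S \<in> sets borel"
  shows "emeasure M S = emeasure M (S \<inter> {0<..})"
proof -
  have n0: "{..0} \<in> null_sets M" using z s by (auto simp: null_sets_def)
  have n: "S \<inter> {..0} \<in> null_sets M" by (rule null_sets_subset[OF n0]) (use S s in auto)
  have "S = (S \<inter> {0<..}) \<union> (S \<inter> {..0})" by auto
  then have "emeasure M S = emeasure M ((S \<inter> {0<..}) \<union> (S \<inter> {..0}))" by simp
  also have "\<dots> = emeasure M (S \<inter> {0<..})"
    by (rule emeasure_Un_null_set) (use S s n in auto)
  finally show ?thesis .
qed

lemma sum_meas_eq:
  assumes S: "S \<in> sets borel" "S \<subseteq> {0<..}"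
  shows "(\<Sum>k\<in>{1..N}. measure (mb (K t x) k) S) = (\<Sum>k\<in>{1..N}. measure (wb \<alpha> t x k) S)"
proof -
  have "(\<Sum>k\<in>{1..N}. emeasure (mb (K t x) k) S) = (\<Sum>k\<in>{1..N}. emeasure (wb \<alpha> t x k) S)"
    using rd_sum[OF sK fK S] wr_emeasure[OF apos t x S(1)] rd_wr by simp
  moreover have "(\<Sum>k\<in>{1..N}. emeasure (mb (K t x) k) S) = ennreal (\<Sum>k\<in>{1..N}. measure (mb (K t x) k) S)"
    by (simp add: finite_measure.emeasure_eq_measure[OF mb_fin[OF sK fK]])
  moreover have "(\<Sum>k\<in>{1..N}. emeasure (wb \<alpha> t x k) S) = ennreal (\<Sum>k\<in>{1..N}. measure (wb \<alpha> t x k) S)"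
    by (simp add: finite_measure.emeasure_eq_measure[OF wb_fin[OF apos t x]])
  ultimately show ?thesis by (simp add: ennreal_inj sum_nonneg)
qed

lemma mb_wb:
  assumes i: "i \<in> {1..N}"
  shows "mb (K t x) i = wb \<alpha> t x i"
proof -
  have ai: "\<alpha> i > 0" using apos i by auto
  have eqS: "measure (mb (K t x) i) S = measure (wb \<alpha> t x i) S" if S: "S \<in> sets borel" "S \<subseteq> {0<..}" for S
  proof -
    define M where "M k = measure (mb (K t x) k) S" for k
    define W where "W k = measure (wb \<alpha> t x k) S" for k
    have e: "\<alpha> j * M i + \<alpha> i * W j = \<alpha> j * W i + \<alpha> i * M j" if j: "j \<in> {1..N}" for j
    proof -
      have aj: "\<alpha> j > 0" using apos j by auto
      have "(1 / \<alpha> i) * M i + (1 / \<alpha> j) * W j = (1 / \<alpha> i) * W i + (1 / \<alpha> j) * M j"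
        unfolding M_def W_def by (rule branch_eq[OF i j S(1)])
      moreover have "\<alpha> j * M i + \<alpha> i * W j = (\<alpha> i * \<alpha> j) * ((1 / \<alpha> i) * M i + (1 / \<alpha> j) * W j)"
        using ai aj by (simp add: field_simps)
      moreover have "\<alpha> j * W i + \<alpha> i * M j = (\<alpha> i * \<alpha> j) * ((1 / \<alpha> i) * W i + (1 / \<alpha> j) * M j)"
        using ai aj by (simp add: field_simps)
      ultimately show ?thesis by simp
    qed
    have "(\<Sum>j\<in>{1..N}. \<alpha> j * M i + \<alpha> i * W j) = (\<Sum>j\<in>{1..N}. \<alpha> j * W i + \<alpha> i * M j)"
      using e by (rule sum.cong[OF refl])
    then have "(\<Sum>j\<in>{1..N}. \<alpha> j) * M i + \<alpha> i * (\<Sum>j\<in>{1..N}. W j) = (\<Sum>j\<in>{1..N}. \<alpha> j) * W i + \<alpha> i * (\<Sum>j\<in>{1..N}. M j)"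
      by (simp add: sum.distrib sum_distrib_left sum_distrib_right)
    moreover have "(\<Sum>j\<in>{1..N}. M j) = (\<Sum>j\<in>{1..N}. W j)"
      unfolding M_def W_def by (rule sum_meas_eq[OF S])
    ultimately show ?thesis using asum unfolding M_def W_def by simp
  qed
  show ?thesis
  proof (rule measure_eqI)
    show "sets (mb (K t x) i) = sets (wb \<alpha> t x i)" using mb_sets[OF sK fK] wb_sets[OF apos t x] by simp
    fix S assume "S \<in> sets (mb (K t x) i)"
    then have S: "S \<in> sets borel" using mb_sets[OF sK fK] by simp
    have S': "S \<inter> {0<..} \<in> sets borel" by (intro sets.Int S) simp
    have "emeasure (mb (K t x) i) S = emeasure (mb (K t x) i) (S \<inter> {0<..})"
      by (rule split0[OF mb_sets[OF sK fK] mb_supp[OF sK fK] S])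
    also have "\<dots> = ennreal (measure (mb (K t x) i) (S \<inter> {0<..}))"
      by (rule finite_measure.emeasure_eq_measure[OF mb_fin[OF sK fK]])
    also have "\<dots> = ennreal (measure (wb \<alpha> t x i) (S \<inter> {0<..}))"
      using eqS[OF S'] by simp
    also have "\<dots> = emeasure (wb \<alpha> t x i) (S \<inter> {0<..})"
      by (rule finite_measure.emeasure_eq_measure[OF wb_fin[OF apos t x i], symmetric])
    also have "\<dots> = emeasure (wb \<alpha> t x i) S"
      by (rule split0[OF wb_sets[OF apos t x] wb_supp[OF apos t x] S, symmetric])
    finally show "emeasure (mb (K t x) i) S = emeasure (wb \<alpha> t x i) S" .
  qed
qed


lemma final:
  assumes f: "f \<in> C0 N"
  shows "Qop K t f x = walshP N \<alpha> t f x"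
proof -
  obtain C where C: "\<forall>p\<in>Gset N. \<bar>f p\<bar> \<le> C" using C0_bounded[OF f] by blast
  have C0: "C \<ge> 0" using C by (auto simp: Gset_def)
  have fb: "\<bar>indicator {0<..} z * f (i, z)\<bar> \<le> C" if "i \<in> {1..N}" for i z
    using C C0 that by (auto simp: Gset_def split: split_indicator)
  have fm: "(\<lambda>z. indicator {0<..} z * f (i, z)) \<in> borel_measurable borel" if "i \<in> {1..N}" for i
    by (rule C0_branch_meas[OF f that])
  have "Qop K t f x = (\<integral>p. f p \<partial>K t x)" by (simp add: Qop_def)
  also have "\<dots> = (\<Sum>i=1..N. \<integral>z. indicator {0<..} z * f (i, z) \<partial>mb (K t x) i) + f (0,0) * measure (rd (K t x)) {0}"
    by (rule mu_decomp[OF sK fK f])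
  also have "measure (rd (K t x)) {0} = 0"
    using rd_wr wr_zero[OF apos t x] by (simp add: measure_def)
  also have "(\<Sum>i=1..N. \<integral>z. indicator {0<..} z * f (i, z) \<partial>mb (K t x) i)
      = (\<Sum>i=1..N. \<integral>z. indicator {0<..} z * dens \<alpha> t x i z * (indicator {0<..} z * f (i, z)) \<partial>lborel)"
  proof (rule sum.cong[OF refl])
    fix i assume i: "i \<in> {1..N}"
    show "(\<integral>z. indicator {0<..} z * f (i, z) \<partial>mb (K t x) i)
      = (\<integral>z. indicator {0<..} z * dens \<alpha> t x i z * (indicator {0<..} z * f (i, z)) \<partial>lborel)"
      unfolding mb_wb[OF i] by (rule wb_int[OF apos t x i fm[OF i]])
  qed
  also have "\<dots> = walshP N \<alpha> t f x"
    by (rule walshP_rep[OF t x fm fb, symmetric])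
  finally show ?thesis by simp
qed

end



theorem mainTheorem5:
  fixes N :: nat and \<alpha> :: "nat \<Rightarrow> real"
    and K :: "real \<Rightarrow> nat \<times> real \<Rightarrow> (nat \<times> real) measure"
  assumes alpha_pos: "\<forall>i\<in>{1..N}. \<alpha> i > 0"
    and alpha_sum: "(\<Sum>i=1..N. \<alpha> i) = 1"
    and fel: "feller N K"
    and eq: "\<forall>f\<in>Dal N \<alpha>. \<forall>x\<in>Gset N. \<forall>t\<ge>0.
               integrable (K t x) f \<and>
               (\<lambda>u. Qop K u (fpp N f) x) integrable_on {0..t} \<and>
               Qop K t f x = f x + (1/2) * integral {0..t} (\<lambda>u. Qop K u (fpp N f) x)"
  shows "\<forall>t\<ge>0. \<forall>f\<in>C0 N. \<forall>x\<in>Gset N. Qop K t f x = walshP N \<alpha> t f x"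
proof (intro allI impI ballI)
  fix t :: real and f x
  assume t: "t \<ge> 0" and f: "f \<in> C0 N" and x: "x \<in> Gset N"
  show "Qop K t f x = walshP N \<alpha> t f x"
  proof (cases "t = 0")
    case True
    then show ?thesis using fel f x by (simp add: feller_def walshP_def)
  next
    case False
    then have "t > 0" using t by simp
    then show ?thesis by (rule final[OF alpha_pos alpha_sum fel eq _ x f])
  qed
qed

end
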